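(* Let $\mathbf Q=\mathbf Q_n$ be symmetric $n\times n$ matrices with zero diagonal and $\sup_n\|\mathbf Q_n\|_{\rm op}<\infty$, and let $\beta>0$ satisfy $\liminf_{n\to\infty}\frac1n\log\big(2^{-n}Z(\beta,\mathbf Q,\mathbf0)\big)>0$. For $\boldsymbol\sigma\in\{-1,1\}^n$ set $m_i(\boldsymbol\sigma):=\sum_j\mathbf Q_{ij}\sigma_j$ and let $\hat\beta_n$ be the maximum pseudo-likelihood estimator of $\beta$ under the working model $\boldsymbol\mu=\mathbf0$, i.e. a solution $b$ of $S_{\boldsymbol\sigma}(b)=0$ where $S_{\boldsymbol\sigma}(b):=\frac1n\sum_{i=1}^nm_i(\boldsymbol\sigma)\big(\sigma_i-\tanh(b\,m_i(\boldsymbol\sigma))\big)$. Let $s_n=o(n)$. Then $\hat\beta_n\to\beta$ in probability uniformly over $\boldsymbol\mu\in[0,\infty)^n$ with $|\mathrm{supp}(\boldsymbol\mu)|\le s_n$: for every $\eta>0$, $\sup_{\boldsymbol\mu}\mathbb P_{\beta,\mathbf Q,\boldsymbol\mu}(|\hat\beta_n-\beta|>\eta)\to0$. The same conclusion holds if, in addition, the spins on a set $S_1\subset[n]$ with $|S_1|=o(n)$ are fixed to $+1$.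
   Context: Ising model: $\mathbb P_{\beta,\mathbf Q,\boldsymbol\mu}(\boldsymbol\sigma)=Z(\beta,\mathbf Q,\boldsymbol\mu)^{-1}\exp(\frac\beta2\boldsymbol\sigma^\top\mathbf Q\boldsymbol\sigma+\boldsymbol\mu^\top\boldsymbol\sigma)$ for $\boldsymbol\sigma\in\{-1,1\}^n$. $\|\cdot\|_{\rm op}$ is the spectral (operator) norm. *)

theory Defs
  imports "HOL-Analysis.Analysis"
begin

text \<open>Matrices of size n are represented as functions nat => nat => real, only the
  entries with indices below n being relevant; vectors likewise as nat => real.\<close>

definition mat_opnorm :: "nat \<Rightarrow> (nat \<Rightarrow> nat \<Rightarrow> real) \<Rightarrow> real" where
  "mat_opnorm n A = Sup {sqrt (\<Sum>i<n. (\<Sum>j<n. A i j * x j)\<^sup>2) | x. (\<Sum>j<n. (x j)\<^sup>2) \<le> 1}"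

definition spin_configs :: "nat \<Rightarrow> nat set \<Rightarrow> (nat \<Rightarrow> real) set" where
  "spin_configs n F = {\<sigma> \<in> PiE {0..<n} (\<lambda>_. {-1, 1}). \<forall>i\<in>F. \<sigma> i = 1}"

definition ising_weight ::
  "nat \<Rightarrow> real \<Rightarrow> (nat \<Rightarrow> nat \<Rightarrow> real) \<Rightarrow> (nat \<Rightarrow> real) \<Rightarrow> (nat \<Rightarrow> real) \<Rightarrow> real" where
  "ising_weight n \<beta> Q \<mu> \<sigma> =
     exp (\<beta> / 2 * (\<Sum>i<n. \<Sum>j<n. \<sigma> i * Q i j * \<sigma> j) + (\<Sum>i<n. \<mu> i * \<sigma> i))"

definition ising_Z :: "nat \<Rightarrow> real \<Rightarrow> (nat \<Rightarrow> nat \<Rightarrow> real) \<Rightarrow> (nat \<Rightarrow> real) \<Rightarrow> real" where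
  "ising_Z n \<beta> Q \<mu> = (\<Sum>\<sigma>\<in>spin_configs n {}. ising_weight n \<beta> Q \<mu> \<sigma>)"

text \<open>Probability of an event A under the Ising model P_{beta,Q,mu} on {-1,1}^n,
  conditioned on (i.e. restricted to) the spins in F being +1; F = {} is the plain model.\<close>
definition ising_prob ::
  "nat \<Rightarrow> real \<Rightarrow> (nat \<Rightarrow> nat \<Rightarrow> real) \<Rightarrow> (nat \<Rightarrow> real) \<Rightarrow> nat set \<Rightarrow> (nat \<Rightarrow> real) set \<Rightarrow> real" where
  "ising_prob n \<beta> Q \<mu> F A =
     (\<Sum>\<sigma>\<in>spin_configs n F \<inter> A. ising_weight n \<beta> Q \<mu> \<sigma>) /
     (\<Sum>\<sigma>\<in>spin_configs n F. ising_weight n \<beta> Q \<mu> \<sigma>)"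

definition local_field :: "nat \<Rightarrow> (nat \<Rightarrow> nat \<Rightarrow> real) \<Rightarrow> (nat \<Rightarrow> real) \<Rightarrow> nat \<Rightarrow> real" where
  "local_field n Q \<sigma> i = (\<Sum>j<n. Q i j * \<sigma> j)"

definition pl_score :: "nat \<Rightarrow> (nat \<Rightarrow> nat \<Rightarrow> real) \<Rightarrow> (nat \<Rightarrow> real) \<Rightarrow> real \<Rightarrow> real" where
  "pl_score n Q \<sigma> b =
     (1 / real n) * (\<Sum>i<n. local_field n Q \<sigma> i * (\<sigma> i - tanh (b * local_field n Q \<sigma> i)))"

definition sparse_fields :: "nat \<Rightarrow> nat \<Rightarrow> (nat \<Rightarrow> real) set" where
  "sparse_fields n s = {\<mu>. (\<forall>i<n. \<mu> i \<ge> 0) \<and> card {i. i < n \<and> \<mu> i \<noteq> 0} \<le> s}"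

end

theory Submission
  imports Defs "HOL-Real_Asymp.Real_Asymp"
begin

lemma sum_sq_CS:
  fixes f g :: "'a \<Rightarrow> real"
  shows "(\<Sum>i\<in>I. f i * g i) \<le> sqrt (\<Sum>i\<in>I. (f i)\<^sup>2) * sqrt (\<Sum>i\<in>I. (g i)\<^sup>2)"
proof -
  have "(\<Sum>i\<in>I. f i * g i) \<le> \<bar>\<Sum>i\<in>I. f i * g i\<bar>" by simp
  also have "\<dots> = sqrt ((\<Sum>i\<in>I. f i * g i)\<^sup>2)" by simp
  also have "\<dots> \<le> sqrt ((\<Sum>i\<in>I. (f i)\<^sup>2) * (\<Sum>i\<in>I. (g i)\<^sup>2))"
    using Cauchy_Schwarz_ineq_sum real_sqrt_le_mono by blast
  also have "\<dots> = sqrt (\<Sum>i\<in>I. (f i)\<^sup>2) * sqrt (\<Sum>i\<in>I. (g i)\<^sup>2)"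
    by (simp add: real_sqrt_mult)
  finally show ?thesis .
qed

lemma opnorm_bdd:
  fixes A :: "nat \<Rightarrow> nat \<Rightarrow> real"
  shows "bdd_above {sqrt (\<Sum>i<n. (\<Sum>j<n. A i j * x j)\<^sup>2) | x. (\<Sum>j<n. (x j)\<^sup>2) \<le> 1}"
proof -
  define B where "B = sqrt (\<Sum>i<n. \<Sum>j<n. (A i j)\<^sup>2)"
  { fix x :: "nat \<Rightarrow> real" assume x: "(\<Sum>j<n. (x j)\<^sup>2) \<le> 1"
    have "\<And>i. (\<Sum>j<n. A i j * x j)\<^sup>2 \<le> (\<Sum>j<n. (A i j)\<^sup>2) * (\<Sum>j<n. (x j)\<^sup>2)"
      by (rule Cauchy_Schwarz_ineq_sum)
    also have "\<And>i. (\<Sum>j<n. (A i j)\<^sup>2) * (\<Sum>j<n. (x j)\<^sup>2) \<le> (\<Sum>j<n. (A i j)\<^sup>2)"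
      using x by (simp add: mult_left_le sum_nonneg)
    finally have "(\<Sum>i<n. (\<Sum>j<n. A i j * x j)\<^sup>2) \<le> (\<Sum>i<n. \<Sum>j<n. (A i j)\<^sup>2)"
      by (intro sum_mono) 
    hence "sqrt (\<Sum>i<n. (\<Sum>j<n. A i j * x j)\<^sup>2) \<le> B" unfolding B_def
      using real_sqrt_le_mono by blast }
  thus ?thesis by (auto intro!: bdd_aboveI[where M=B])
qed

lemma opnorm_bound:
  assumes "mat_opnorm n A \<le> C"
  shows "C \<ge> 0" "(\<Sum>i<n. (\<Sum>j<n. A i j * x j)\<^sup>2) \<le> C\<^sup>2 * (\<Sum>j<n. (x j)\<^sup>2)"
proof -
  let ?S = "{sqrt (\<Sum>i<n. (\<Sum>j<n. A i j * x j)\<^sup>2) | x. (\<Sum>j<n. (x j)\<^sup>2) \<le> 1}"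
  have mem: "sqrt (\<Sum>i<n. (\<Sum>j<n. A i j * y j)\<^sup>2) \<le> C" if "(\<Sum>j<n. (y j)\<^sup>2) \<le> 1" for y
  proof -
    have "sqrt (\<Sum>i<n. (\<Sum>j<n. A i j * y j)\<^sup>2) \<le> Sup ?S"
      using that by (intro cSup_upper[OF _ opnorm_bdd]) blast
    thus ?thesis using assms unfolding mat_opnorm_def by linarith
  qed
  from mem[of "\<lambda>_. 0"] show C0: "C \<ge> 0" by simp
  define s where "s = (\<Sum>j<n. (x j)\<^sup>2)"
  have s0: "s \<ge> 0" unfolding s_def by (simp add: sum_nonneg)
  show "(\<Sum>i<n. (\<Sum>j<n. A i j * x j)\<^sup>2) \<le> C\<^sup>2 * (\<Sum>j<n. (x j)\<^sup>2)"
  proof (cases "s = 0")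
    case True
    hence "\<forall>j\<in>{..<n}. (x j)\<^sup>2 = 0" unfolding s_def
      by (subst sum_nonneg_eq_0_iff[symmetric]) auto
    hence "\<And>j. j < n \<Longrightarrow> x j = 0" by simp
    hence "\<And>i. (\<Sum>j<n. A i j * x j) = 0" by (intro sum.neutral) auto
    thus ?thesis by (simp add: sum_nonneg)
  next
    case False
    hence sp: "s > 0" using s0 by simp
    define y where "y j = x j / sqrt s" for j
    have "(\<Sum>j<n. (y j)\<^sup>2) = (\<Sum>j<n. (x j)\<^sup>2) / s"
      unfolding y_def using s0 by (simp add: power_divide sum_divide_distrib)
    hence "(\<Sum>j<n. (y j)\<^sup>2) \<le> 1" using sp unfolding s_def by simp
    from mem[OF this] have "(\<Sum>i<n. (\<Sum>j<n. A i j * y j)\<^sup>2) \<le> C\<^sup>2"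
      using C0 by (metis real_le_rsqrt sqrt_le_D)
    moreover have "(\<Sum>i<n. (\<Sum>j<n. A i j * y j)\<^sup>2) = (\<Sum>i<n. (\<Sum>j<n. A i j * x j)\<^sup>2) / s"
    proof -
      have e: "\<And>i. (\<Sum>j<n. A i j * y j) = (\<Sum>j<n. A i j * x j) / sqrt s"
        unfolding y_def by (simp add: sum_divide_distrib)
      have "(\<Sum>i<n. (\<Sum>j<n. A i j * y j)\<^sup>2) = (\<Sum>i<n. (\<Sum>j<n. A i j * x j)\<^sup>2 / s)"
        using s0 by (intro sum.cong refl) (simp add: e power_divide)
      thus ?thesis by (simp add: sum_divide_distrib)
    qed
    ultimately show ?thesis using sp unfolding s_def[symmetric]
      by (simp add: divide_le_eq mult.commute)
  qed
qed

locale qctx =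
  fixes n :: nat and Q :: "nat \<Rightarrow> nat \<Rightarrow> real" and C :: real
  assumes symm: "\<And>i j. i < n \<Longrightarrow> j < n \<Longrightarrow> Q i j = Q j i"
    and diag: "\<And>i. i < n \<Longrightarrow> Q i i = 0"
    and opn: "mat_opnorm n Q \<le> C"
begin

abbreviation m where "m \<sigma> i \<equiv> local_field n Q \<sigma> i"

lemma C0: "C \<ge> 0" using opnorm_bound(1)[OF opn] .

lemma sumsq_m: "(\<Sum>i<n. (m \<sigma> i)\<^sup>2) \<le> C\<^sup>2 * (\<Sum>j<n. (\<sigma> j)\<^sup>2)"
  unfolding local_field_def using opnorm_bound(2)[OF opn] .

lemma sumsq_m_spin:
  assumes "\<And>j. j < n \<Longrightarrow> \<bar>\<sigma> j\<bar> \<le> 1"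
  shows "(\<Sum>i<n. (m \<sigma> i)\<^sup>2) \<le> C\<^sup>2 * n"
proof -
  have "(\<Sum>j<n. (\<sigma> j)\<^sup>2) \<le> (\<Sum>j<n. 1)"
    using assms by (intro sum_mono) (simp add: abs_square_le_1)
  hence "(\<Sum>j<n. (\<sigma> j)\<^sup>2) \<le> n" by simp
  thus ?thesis using sumsq_m[of \<sigma>] by (meson order_trans mult_left_mono zero_le_power2)
qed

lemma row_sq: assumes "i < n" shows "(\<Sum>j<n. (Q i j)\<^sup>2) \<le> C\<^sup>2"
proof -
  define x where "x = (\<lambda>j. if j = i then 1 else (0::real))"
  have "(\<Sum>k<n. (\<Sum>j<n. Q k j * x j)\<^sup>2) \<le> C\<^sup>2 * (\<Sum>j<n. (x j)\<^sup>2)"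
    by (rule opnorm_bound(2)[OF opn])
  moreover have "(\<Sum>j<n. (x j)\<^sup>2) = (\<Sum>j<n. if j = i then 1 else 0)"
    by (intro sum.cong) (auto simp: x_def)
  moreover have "\<And>k. (\<Sum>j<n. Q k j * x j) = (\<Sum>j<n. if j = i then Q k i else 0)"
    by (intro sum.cong) (auto simp: x_def)
  moreover have "(\<Sum>k<n. (Q k i)\<^sup>2) = (\<Sum>j<n. (Q i j)\<^sup>2)"
    using assms symm by (intro sum.cong) auto
  ultimately show ?thesis using assms by simp
qed

lemma entry_bd: assumes "i < n" "j < n" shows "\<bar>Q i j\<bar> \<le> C"
proof -
  have "(Q i j)\<^sup>2 \<le> (\<Sum>k<n. (Q i k)\<^sup>2)"
    using assms by (intro member_le_sum) auto
  hence "(Q i j)\<^sup>2 \<le> C\<^sup>2" using row_sq[OF assms(1)] by simp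
  thus ?thesis using C0 by (metis abs_le_square_iff abs_of_nonneg)
qed

lemma sum_abs_CS:
  fixes f g :: "'a \<Rightarrow> real"
  shows "(\<Sum>i\<in>I. \<bar>f i\<bar> * \<bar>g i\<bar>) \<le> sqrt (\<Sum>i\<in>I. (f i)\<^sup>2) * sqrt (\<Sum>i\<in>I. (g i)\<^sup>2)"
  using sum_sq_CS[of "\<lambda>i. \<bar>f i\<bar>" "\<lambda>i. \<bar>g i\<bar>" I] by simp

lemma row_abs: assumes "i < n" shows "(\<Sum>j<n. \<bar>Q i j\<bar>) \<le> sqrt n * C"
proof -
  have "(\<Sum>j<n. \<bar>1\<bar> * \<bar>Q i j\<bar>) \<le> sqrt (\<Sum>j<n. 1\<^sup>2) * sqrt (\<Sum>j<n. (Q i j)\<^sup>2)"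
    by (rule sum_abs_CS)
  also have "\<dots> = sqrt n * sqrt (\<Sum>j<n. (Q i j)\<^sup>2)" by simp
  also have "\<dots> \<le> sqrt n * C"
    using row_sq[OF assms] C0 by (intro mult_left_mono) (auto simp: real_le_lsqrt)
  finally show ?thesis by simp
qed

lemma m_bd:
  assumes "i < n" "\<And>j. j < n \<Longrightarrow> \<bar>\<sigma> j\<bar> \<le> 1"
  shows "\<bar>m \<sigma> i\<bar> \<le> sqrt n * C"
proof -
  have "\<bar>m \<sigma> i\<bar> \<le> (\<Sum>j<n. \<bar>Q i j * \<sigma> j\<bar>)" unfolding local_field_def by (rule sum_abs)
  also have "\<dots> \<le> (\<Sum>j<n. \<bar>Q i j\<bar>)"
    using assms(2) by (intro sum_mono) (simp add: abs_mult mult_left_le)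
  finally show ?thesis using row_abs[OF assms(1)] by linarith
qed

lemma sqrtCn:
  assumes "\<And>j. j < n \<Longrightarrow> \<bar>\<sigma> j\<bar> \<le> 1"
  shows "sqrt (\<Sum>j<n. (m \<sigma> j)\<^sup>2) \<le> C * sqrt n"
proof -
  have "sqrt (\<Sum>j<n. (m \<sigma> j)\<^sup>2) \<le> sqrt (C\<^sup>2 * n)"
    using sumsq_m_spin[OF assms] by (rule real_sqrt_le_mono)
  also have "\<dots> = C * sqrt n" using C0 by (simp add: real_sqrt_mult)
  finally show ?thesis .
qed

lemma sum_abs_m_sub:
  assumes "U \<subseteq> {..<n}" "\<And>j. j < n \<Longrightarrow> \<bar>\<sigma> j\<bar> \<le> 1"
  shows "(\<Sum>i\<in>U. \<bar>m \<sigma> i\<bar>) \<le> sqrt (card U) * (C * sqrt n)"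
proof -
  have cs: "(\<Sum>i\<in>U. \<bar>1\<bar> * \<bar>m \<sigma> i\<bar>) \<le> sqrt (\<Sum>i\<in>U. 1\<^sup>2) * sqrt (\<Sum>i\<in>U. (m \<sigma> i)\<^sup>2)"
    by (rule sum_abs_CS)
  have "(\<Sum>i\<in>U. (m \<sigma> i)\<^sup>2) \<le> (\<Sum>i<n. (m \<sigma> i)\<^sup>2)"
    using assms(1) by (intro sum_mono2) auto
  hence "sqrt (\<Sum>i\<in>U. (m \<sigma> i)\<^sup>2) \<le> sqrt (\<Sum>i<n. (m \<sigma> i)\<^sup>2)"
    by (rule real_sqrt_le_mono)
  moreover have "sqrt (\<Sum>i<n. (m \<sigma> i)\<^sup>2) \<le> C * sqrt n"
    using assms(2) by (rule sqrtCn)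
  ultimately have "sqrt (\<Sum>i\<in>U. (m \<sigma> i)\<^sup>2) \<le> C * sqrt n" by linarith
  hence "sqrt (card U) * sqrt (\<Sum>i\<in>U. (m \<sigma> i)\<^sup>2) \<le> sqrt (card U) * (C * sqrt n)"
    by (intro mult_left_mono) auto
  hence "sqrt (\<Sum>i\<in>U. 1\<^sup>2) * sqrt (\<Sum>i\<in>U. (m \<sigma> i)\<^sup>2) \<le> sqrt (card U) * (C * sqrt n)"
    by simp
  with cs show ?thesis by simp
qed

lemma sum_abs_m:
  assumes "\<And>j. j < n \<Longrightarrow> \<bar>\<sigma> j\<bar> \<le> 1"
  shows "(\<Sum>i<n. \<bar>m \<sigma> i\<bar>) \<le> C * n"
proof -
  have "(\<Sum>i\<in>{..<n}. \<bar>m \<sigma> i\<bar>) \<le> sqrt (card {..<n}) * (C * sqrt n)"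
    using sum_abs_m_sub[of "{..<n}" \<sigma>] assms by blast
  also have "\<dots> = C * (sqrt n * sqrt n)" by simp
  also have "\<dots> = C * n" by simp
  finally show ?thesis .
qed

lemma row_m: 
  assumes "i < n" "\<And>j. j < n \<Longrightarrow> \<bar>\<sigma> j\<bar> \<le> 1"
  shows "(\<Sum>j<n. \<bar>Q i j\<bar> * \<bar>m \<sigma> j\<bar>) \<le> C * (C * sqrt n)"
proof -
  have "(\<Sum>j<n. \<bar>Q i j\<bar> * \<bar>m \<sigma> j\<bar>) \<le> sqrt (\<Sum>j<n. (Q i j)\<^sup>2) * sqrt (\<Sum>j<n. (m \<sigma> j)\<^sup>2)"
    by (rule sum_abs_CS)
  also have "\<dots> \<le> C * (C * sqrt n)"
  proof (rule mult_mono)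
    show "sqrt (\<Sum>j<n. (Q i j)\<^sup>2) \<le> C" using row_sq[OF assms(1)] C0 by (auto simp: real_le_lsqrt)
    show "sqrt (\<Sum>j<n. (m \<sigma> j)\<^sup>2) \<le> C * sqrt n"
      using assms(2) by (rule sqrtCn)
  qed (use C0 in \<open>auto intro: sum_nonneg\<close>)
  finally show ?thesis .
qed

end

context qctx begin

definition qf where "qf \<sigma> = (\<Sum>i<n. \<Sum>j<n. \<sigma> i * Q i j * \<sigma> j)"

lemma lf_upd:
  assumes "i < n"
  shows "m (\<sigma>(i := v)) j = m \<sigma> j + Q j i * (v - \<sigma> i)"
proof -
  have "m (\<sigma>(i := v)) j = (\<Sum>k<n. Q j k * \<sigma> k + (if k = i then Q j i * (v - \<sigma> i) else 0))"
    unfolding local_field_def by (intro sum.cong) (auto simp: algebra_simps)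
  also have "\<dots> = m \<sigma> j + Q j i * (v - \<sigma> i)"
    using assms by (simp add: sum.distrib local_field_def)
  finally show ?thesis .
qed

lemma lf_upd_self:
  assumes "i < n"
  shows "m (\<sigma>(i := v)) i = m \<sigma> i"
  using lf_upd[OF assms] diag[OF assms] by simp

lemma qf_upd:
  assumes "i < n"
  shows "qf (\<sigma>(i := v)) = qf \<sigma> + 2 * (v - \<sigma> i) * m \<sigma> i"
proof -
  define d where "d = v - \<sigma> i"
  have pt: "(\<sigma>(i := v)) a * Q a b * (\<sigma>(i := v)) b =
      \<sigma> a * Q a b * \<sigma> b + (if a = i then d * Q i b * \<sigma> b else 0)
      + (if b = i then \<sigma> a * Q a i * d else 0) + (if a = i \<and> b = i then d * d * Q i i else 0)" for a b
    unfolding d_def by (auto simp: algebra_simps)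
  have "qf (\<sigma>(i := v)) = (\<Sum>a<n. \<Sum>b<n. \<sigma> a * Q a b * \<sigma> b + (if a = i then d * Q i b * \<sigma> b else 0)
      + (if b = i then \<sigma> a * Q a i * d else 0) + (if a = i \<and> b = i then d * d * Q i i else 0))"
    unfolding qf_def pt ..
  also have "\<dots> = qf \<sigma> + d * (\<Sum>b<n. Q i b * \<sigma> b) + d * (\<Sum>a<n. \<sigma> a * Q a i) + d * d * Q i i"
  proof -
    have e1: "(\<Sum>a<n. \<Sum>b<n. (if a = i then d * Q i b * \<sigma> b else 0)) = d * (\<Sum>b<n. Q i b * \<sigma> b)"
    proof -
      have "(\<Sum>a<n. \<Sum>b<n. (if a = i then d * Q i b * \<sigma> b else 0)) = (\<Sum>a<n. if a = i then (\<Sum>b<n. d * Q i b * \<sigma> b) else 0)"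
        by (intro sum.cong) auto
      also have "\<dots> = (\<Sum>b<n. d * Q i b * \<sigma> b)" using assms by simp
      finally show ?thesis by (simp add: sum_distrib_left mult.assoc)
    qed
    have e2: "(\<Sum>a<n. \<Sum>b<n. (if b = i then \<sigma> a * Q a i * d else 0)) = d * (\<Sum>a<n. \<sigma> a * Q a i)"
    proof -
      have "(\<Sum>a<n. \<Sum>b<n. (if b = i then \<sigma> a * Q a i * d else 0)) = (\<Sum>a<n. \<sigma> a * Q a i * d)"
        using assms by (intro sum.cong) auto
      thus ?thesis by (simp add: sum_distrib_left mult.commute mult.left_commute)
    qed
    have e3: "(\<Sum>a<n. \<Sum>b<n. (if a = i \<and> b = i then d * d * Q i i else 0)) = d * d * Q i i"
    proof -
      have "(\<Sum>a<n. \<Sum>b<n. (if a = i \<and> b = i then d * d * Q i i else 0)) = (\<Sum>a<n. if a = i then d * d * Q i i else 0)"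
        using assms by (intro sum.cong) auto
      thus ?thesis using assms by simp
    qed
    show ?thesis unfolding sum.distrib e1 e2 e3 qf_def ..
  qed
  also have "(\<Sum>a<n. \<sigma> a * Q a i) = m \<sigma> i"
    unfolding local_field_def using assms symm by (intro sum.cong) auto
  also have "(\<Sum>b<n. Q i b * \<sigma> b) = m \<sigma> i" unfolding local_field_def ..
  finally show ?thesis using diag[OF assms] unfolding d_def fun_upd_def by (simp add: algebra_simps)
qed

end

lemma tanh_id: "exp (-2 * x) * (1 + tanh x) = 1 - tanh (x::real)"
proof -
  have p: "1 + exp (-2 * x) > 0" by (simp add: add_pos_pos)
  show ?thesis unfolding tanh_real_altdef using p
    by (simp add: field_simps)
qed

lemma tanh_flip:
  assumes "s \<in> {-1, 1::real}"
  shows "exp (- 2 * s * x) * (- s - tanh x) = - (s - tanh x)"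
proof (cases "s = 1")
  case True thus ?thesis using tanh_id[of x] by (simp add: algebra_simps)
next
  case False
  hence s: "s = -1" using assms by auto
  have "exp (2 * x) * (1 - tanh x) = exp (2*x) * (exp (-2 * x) * (1 + tanh x))"
    using tanh_id[of x] by simp
  also have "\<dots> = 1 + tanh x" by (simp add: exp_add[symmetric] mult.assoc[symmetric])
  finally show ?thesis using s by (simp add: algebra_simps)
qed

lemma spin_mem: "\<sigma> \<in> spin_configs n F \<Longrightarrow> i < n \<Longrightarrow> \<sigma> i \<in> {-1, 1}"
  unfolding spin_configs_def by (auto simp: PiE_def Pi_def)

lemma spin_abs: "\<sigma> \<in> spin_configs n F \<Longrightarrow> i < n \<Longrightarrow> \<bar>\<sigma> i\<bar> \<le> 1"
  using spin_mem by fastforce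

lemma spin_fin: "finite (spin_configs n F)"
proof -
  have "spin_configs n F \<subseteq> PiE {0..<n} (\<lambda>_. {-1, 1::real})" unfolding spin_configs_def by auto
  moreover have "finite (PiE {0..<n} (\<lambda>_. {-1, 1::real}))" by (intro finite_PiE) auto
  ultimately show ?thesis by (rule finite_subset)
qed

lemma flip_mem:
  assumes "\<sigma> \<in> spin_configs n F" "i < n" "i \<notin> F"
  shows "\<sigma>(i := - \<sigma> i) \<in> spin_configs n F"
  using assms unfolding spin_configs_def by (auto simp: PiE_def Pi_def extensional_def)

context qctx begin

lemma weight_qf: "ising_weight n \<beta> Q \<mu> \<sigma> = exp (\<beta> / 2 * qf \<sigma> + (\<Sum>i<n. \<mu> i * \<sigma> i))"
  unfolding ising_weight_def qf_def ..

lemma weight_flip: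
  assumes "i < n" "\<mu> i = 0"
  shows "ising_weight n \<beta> Q \<mu> (\<sigma>(i := - \<sigma> i)) = exp (- 2 * \<sigma> i * (\<beta> * m \<sigma> i)) * ising_weight n \<beta> Q \<mu> \<sigma>"
proof -
  have "(\<Sum>j<n. \<mu> j * (\<sigma>(i := - \<sigma> i)) j) = (\<Sum>j<n. \<mu> j * \<sigma> j)"
    using assms by (intro sum.cong) auto
  moreover have "qf (\<sigma>(i := - \<sigma> i)) = qf \<sigma> - 4 * \<sigma> i * m \<sigma> i"
    using qf_upd[OF assms(1)] by simp
  ultimately show ?thesis unfolding weight_qf
    by (simp add: exp_add[symmetric] algebra_simps) (metis distrib_left add.commute add_diff_cancel_left')
qed

lemma centering:
  assumes i: "i < n" "i \<notin> F" "\<mu> i = 0"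
    and h: "\<And>\<sigma>. h (\<sigma>(i := - \<sigma> i)) = h \<sigma>"
  shows "(\<Sum>\<sigma>\<in>spin_configs n F. ising_weight n \<beta> Q \<mu> \<sigma> * (m \<sigma> i * (\<sigma> i - tanh (\<beta> * m \<sigma> i))) * h \<sigma>) = 0"
proof -
  define f where "f \<sigma> = ising_weight n \<beta> Q \<mu> \<sigma> * (m \<sigma> i * (\<sigma> i - tanh (\<beta> * m \<sigma> i))) * h \<sigma>" for \<sigma>
  define fl where "fl \<sigma> = \<sigma>(i := - \<sigma> i)" for \<sigma> :: "nat \<Rightarrow> real"
  have flfl: "fl (fl \<sigma>) = \<sigma>" for \<sigma> unfolding fl_def by auto
  have flm: "\<sigma> \<in> spin_configs n F \<Longrightarrow> fl \<sigma> \<in> spin_configs n F" for \<sigma>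
    unfolding fl_def using flip_mem i by blast
  have "(\<Sum>\<sigma>\<in>spin_configs n F. f \<sigma>) = (\<Sum>\<sigma>\<in>spin_configs n F. f (fl \<sigma>))"
    by (rule sum.reindex_bij_witness[where i=fl and j=fl]) (auto simp: flfl flm)
  also have "\<dots> = (\<Sum>\<sigma>\<in>spin_configs n F. - f \<sigma>)"
  proof (intro sum.cong refl)
    fix \<sigma> assume s: "\<sigma> \<in> spin_configs n F"
    have hs: "h (fl \<sigma>) = h \<sigma>" unfolding fl_def by (rule h)
    have ms: "m (fl \<sigma>) i = m \<sigma> i" unfolding fl_def by (rule lf_upd_self[OF i(1)])
    have si: "\<sigma> i \<in> {-1, 1}" using spin_mem[OF s i(1)] .
    have "f (fl \<sigma>) = ising_weight n \<beta> Q \<mu> \<sigma> * m \<sigma> i * h \<sigma> *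
        (exp (- 2 * \<sigma> i * (\<beta> * m \<sigma> i)) * (- \<sigma> i - tanh (\<beta> * m \<sigma> i)))"
      unfolding f_def hs ms unfolding fl_def weight_flip[of i \<mu>, OF i(1) i(3)] by simp
    also have "\<dots> = - f \<sigma>" unfolding f_def tanh_flip[OF si] by (simp add: algebra_simps)
    finally show "f (fl \<sigma>) = - f \<sigma>" .
  qed
  finally have "(\<Sum>\<sigma>\<in>spin_configs n F. f \<sigma>) = 0" by (simp add: sum_negf)
  thus ?thesis unfolding f_def .
qed

end

lemma tanh_lip: "\<bar>tanh a - tanh b\<bar> \<le> \<bar>a - (b::real)\<bar>"
proof -
  have gen: "\<bar>tanh y - tanh x\<bar> \<le> y - x" if "x < y" for x y :: real
  proof -
    have "\<And>z. x \<le> z \<Longrightarrow> z \<le> y \<Longrightarrow> (tanh has_real_derivative (1 - (tanh z)\<^sup>2)) (at z)"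
      by (auto intro!: derivative_eq_intros)
    from MVT2[OF that this] obtain z where z: "tanh y - tanh x = (y - x) * (1 - (tanh z)\<^sup>2)" by blast
    have "\<bar>tanh z\<bar> < 1" using tanh_real_bounds[of z] by auto
    hence "0 \<le> 1 - (tanh z)\<^sup>2" "1 - (tanh z)\<^sup>2 \<le> 1" by (auto simp: abs_square_less_1 less_imp_le)
    thus ?thesis unfolding z using that by (simp add: abs_mult mult_left_le)
  qed
  show ?thesis
  proof (cases a b rule: linorder_cases)
    case less thus ?thesis using gen[OF less] by (simp add: abs_minus_commute)
  next
    case greater thus ?thesis using gen[OF greater] by simp
  qed simp
qed

context qctx begin

definition Y where "Y \<beta> \<sigma> j = m \<sigma> j * (\<sigma> j - tanh (\<beta> * m \<sigma> j))"

lemma Y_bd: assumes "\<bar>\<sigma> j\<bar> \<le> 1" shows "\<bar>Y \<beta> \<sigma> j\<bar> \<le> 2 * \<bar>m \<sigma> j\<bar>"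
proof -
  have "\<bar>\<sigma> j - tanh (\<beta> * m \<sigma> j)\<bar> \<le> 2"
    using assms tanh_real_bounds[of "\<beta> * m \<sigma> j"] by auto
  thus ?thesis unfolding Y_def abs_mult by (metis mult_left_mono abs_ge_zero mult.commute)
qed

lemma Y_diff:
  assumes i: "i < n" and s: "\<And>k. k < n \<Longrightarrow> \<bar>\<sigma> k\<bar> \<le> 1" and b: "\<beta> \<ge> 0" and j: "j < n"
  shows "\<bar>Y \<beta> \<sigma> j - Y \<beta> (\<sigma>(i := 0)) j\<bar> \<le>
     2 * \<bar>Q j i\<bar> + (\<bar>m \<sigma> j\<bar> + \<bar>Q j i\<bar>) * ((if i = j then 1 else 0) + \<beta> * \<bar>Q j i\<bar>)"
proof -
  define m1 where "m1 = m \<sigma> j"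
  define m2 where "m2 = m (\<sigma>(i := 0)) j"
  define u1 where "u1 = \<sigma> j - tanh (\<beta> * m1)"
  define u2 where "u2 = (\<sigma>(i := 0)) j - tanh (\<beta> * m2)"
  have m2e: "m2 = m1 - Q j i * \<sigma> i" unfolding m1_def m2_def using lf_upd[OF i, of \<sigma> 0 j] by simp
  have si: "\<bar>\<sigma> i\<bar> \<le> 1" using s i by blast
  have d1: "\<bar>m1 - m2\<bar> \<le> \<bar>Q j i\<bar>" unfolding m2e using si by (simp add: abs_mult mult_left_le)
  have u1b: "\<bar>u1\<bar> \<le> 2" unfolding u1_def
    using tanh_real_bounds[of "\<beta> * m1"] s[OF j] by (auto simp: abs_le_iff)
  have "\<bar>u1\<bar> \<le> 2" by fact
  have m2b: "\<bar>m2\<bar> \<le> \<bar>m1\<bar> + \<bar>Q j i\<bar>" using d1 by linarith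
  have "\<bar>\<sigma> j - (\<sigma>(i := 0)) j\<bar> \<le> (if i = j then 1 else 0)" using si by auto
  moreover have "\<bar>tanh (\<beta> * m1) - tanh (\<beta> * m2)\<bar> \<le> \<beta> * \<bar>Q j i\<bar>"
  proof -
    have "\<bar>tanh (\<beta> * m1) - tanh (\<beta> * m2)\<bar> \<le> \<bar>\<beta> * m1 - \<beta> * m2\<bar>" by (rule tanh_lip)
    also have "\<dots> = \<beta> * \<bar>m1 - m2\<bar>" using b by (simp add: abs_mult right_diff_distrib[symmetric])
    also have "\<dots> \<le> \<beta> * \<bar>Q j i\<bar>" using d1 b by (intro mult_left_mono)
    finally show ?thesis .
  qed
  ultimately have d2: "\<bar>u1 - u2\<bar> \<le> (if i = j then 1 else 0) + \<beta> * \<bar>Q j i\<bar>"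
    unfolding u1_def u2_def by linarith
  have "Y \<beta> \<sigma> j - Y \<beta> (\<sigma>(i := 0)) j = (m1 - m2) * u1 + m2 * (u1 - u2)"
    unfolding Y_def m1_def[symmetric] m2_def[symmetric] u1_def u2_def by (simp add: algebra_simps)
  also have "\<bar>\<dots>\<bar> \<le> \<bar>m1 - m2\<bar> * \<bar>u1\<bar> + \<bar>m2\<bar> * \<bar>u1 - u2\<bar>"
    by (metis abs_mult abs_triangle_ineq)
  also have "\<dots> \<le> \<bar>Q j i\<bar> * 2 + (\<bar>m1\<bar> + \<bar>Q j i\<bar>) * ((if i = j then 1 else 0) + \<beta> * \<bar>Q j i\<bar>)"
    by (intro add_mono mult_mono d1 u1b m2b d2) auto
  finally show ?thesis unfolding m1_def by (simp add: mult.commute)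
qed

definition Bd where "Bd \<beta> = (3 * C + \<beta> * C\<^sup>2) * sqrt n + \<beta> * C\<^sup>2"

lemma Y_diff_sum:
  assumes i: "i < n" and s: "\<And>k. k < n \<Longrightarrow> \<bar>\<sigma> k\<bar> \<le> 1" and b: "\<beta> \<ge> 0"
  shows "(\<Sum>j<n. \<bar>Y \<beta> \<sigma> j - Y \<beta> (\<sigma>(i := 0)) j\<bar>) \<le> Bd \<beta>"
proof -
  have "(\<Sum>j<n. \<bar>Y \<beta> \<sigma> j - Y \<beta> (\<sigma>(i := 0)) j\<bar>) \<le>
    (\<Sum>j<n. 2 * \<bar>Q i j\<bar> + (if i = j then \<bar>m \<sigma> j\<bar> + \<bar>Q j i\<bar> else 0)
        + \<beta> * (\<bar>Q i j\<bar> * \<bar>m \<sigma> j\<bar>) + \<beta> * (Q i j)\<^sup>2)"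
  proof (intro sum_mono)
    fix j assume j: "j \<in> {..<n}"
    have "\<bar>Y \<beta> \<sigma> j - Y \<beta> (\<sigma>(i := 0)) j\<bar> \<le>
     2 * \<bar>Q j i\<bar> + (\<bar>m \<sigma> j\<bar> + \<bar>Q j i\<bar>) * ((if i = j then 1 else 0) + \<beta> * \<bar>Q j i\<bar>)"
      using j by (intro Y_diff[OF i s b]) auto
    moreover have "Q j i = Q i j" using symm i j by auto
    ultimately show "\<bar>Y \<beta> \<sigma> j - Y \<beta> (\<sigma>(i := 0)) j\<bar> \<le> 2 * \<bar>Q i j\<bar> + (if i = j then \<bar>m \<sigma> j\<bar> + \<bar>Q j i\<bar> else 0)
        + \<beta> * (\<bar>Q i j\<bar> * \<bar>m \<sigma> j\<bar>) + \<beta> * (Q i j)\<^sup>2"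
      by (cases "i = j") (simp_all add: algebra_simps power2_eq_square)
  qed
  also have "\<dots> = 2 * (\<Sum>j<n. \<bar>Q i j\<bar>) + (\<bar>m \<sigma> i\<bar> + \<bar>Q i i\<bar>) + \<beta> * (\<Sum>j<n. \<bar>Q i j\<bar> * \<bar>m \<sigma> j\<bar>)
      + \<beta> * (\<Sum>j<n. (Q i j)\<^sup>2)"
    using i by (simp add: sum.distrib sum_distrib_left)
  also have "\<dots> \<le> 2 * (sqrt n * C) + (sqrt n * C + 0) + \<beta> * (C * (C * sqrt n)) + \<beta> * C\<^sup>2"
    using b by (intro add_mono mult_left_mono row_abs i m_bd s row_m row_sq) (auto simp: diag i)
  also have "\<dots> = Bd \<beta>" unfolding Bd_def by (simp add: algebra_simps power2_eq_square)
  finally show ?thesis .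
qed

lemma second_moment:
  assumes G: "G \<subseteq> {..<n}" "\<And>i. i \<in> G \<Longrightarrow> i \<notin> F \<and> \<mu> i = 0" and b: "\<beta> \<ge> 0"
  shows "(\<Sum>\<sigma>\<in>spin_configs n F. ising_weight n \<beta> Q \<mu> \<sigma> * (\<Sum>i\<in>G. Y \<beta> \<sigma> i)\<^sup>2)
     \<le> (\<Sum>\<sigma>\<in>spin_configs n F. ising_weight n \<beta> Q \<mu> \<sigma>) * (2 * (C * n) * Bd \<beta>)"
proof -
  let ?SC = "spin_configs n F"
  let ?w = "ising_weight n \<beta> Q \<mu>"
  define D where "D \<sigma> i j = Y \<beta> \<sigma> j - Y \<beta> (\<sigma>(i := 0)) j" for \<sigma> i j
  have finG: "finite G" using G(1) finite_subset by blast
  have cen: "(\<Sum>\<sigma>\<in>?SC. ?w \<sigma> * Y \<beta> \<sigma> i * Y \<beta> (\<sigma>(i := 0)) j) = 0" if "i \<in> G" for i j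
  proof -
    have "(\<Sum>\<sigma>\<in>?SC. ?w \<sigma> * (m \<sigma> i * (\<sigma> i - tanh (\<beta> * m \<sigma> i))) * Y \<beta> (\<sigma>(i := 0)) j) = 0"
      using G that by (intro centering) auto
    thus ?thesis unfolding Y_def .
  qed
  have "(\<Sum>\<sigma>\<in>?SC. ?w \<sigma> * (\<Sum>i\<in>G. Y \<beta> \<sigma> i)\<^sup>2)
      = (\<Sum>\<sigma>\<in>?SC. \<Sum>i\<in>G. \<Sum>j\<in>G. ?w \<sigma> * Y \<beta> \<sigma> i * Y \<beta> \<sigma> j)"
  proof (intro sum.cong refl)
    fix \<sigma>
    have "(\<Sum>i\<in>G. Y \<beta> \<sigma> i)\<^sup>2 = (\<Sum>i\<in>G. \<Sum>j\<in>G. Y \<beta> \<sigma> i * Y \<beta> \<sigma> j)"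
      unfolding power2_eq_square by (rule sum_product)
    thus "?w \<sigma> * (\<Sum>i\<in>G. Y \<beta> \<sigma> i)\<^sup>2 = (\<Sum>i\<in>G. \<Sum>j\<in>G. ?w \<sigma> * Y \<beta> \<sigma> i * Y \<beta> \<sigma> j)"
      by (simp add: sum_distrib_left mult.assoc)
  qed
  also have "\<dots> = (\<Sum>i\<in>G. \<Sum>j\<in>G. \<Sum>\<sigma>\<in>?SC. ?w \<sigma> * Y \<beta> \<sigma> i * Y \<beta> \<sigma> j)"
    by (simp add: sum.swap[of _ ?SC] sum.swap[of _ ?SC G])
  also have "\<dots> = (\<Sum>i\<in>G. \<Sum>j\<in>G. \<Sum>\<sigma>\<in>?SC. ?w \<sigma> * Y \<beta> \<sigma> i * D \<sigma> i j)"
  proof (rule sum.cong[OF refl], rule sum.cong[OF refl])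
    fix i j assume i: "i \<in> G" and "j \<in> G"
    have "(\<Sum>\<sigma>\<in>?SC. ?w \<sigma> * Y \<beta> \<sigma> i * Y \<beta> \<sigma> j) =
      (\<Sum>\<sigma>\<in>?SC. ?w \<sigma> * Y \<beta> \<sigma> i * D \<sigma> i j) + (\<Sum>\<sigma>\<in>?SC. ?w \<sigma> * Y \<beta> \<sigma> i * Y \<beta> (\<sigma>(i := 0)) j)"
      unfolding D_def sum.distrib[symmetric] by (intro sum.cong) (auto simp: algebra_simps)
    thus "(\<Sum>\<sigma>\<in>?SC. ?w \<sigma> * Y \<beta> \<sigma> i * Y \<beta> \<sigma> j) = (\<Sum>\<sigma>\<in>?SC. ?w \<sigma> * Y \<beta> \<sigma> i * D \<sigma> i j)"
      using cen[OF i] by simp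
  qed
  also have "\<dots> = (\<Sum>\<sigma>\<in>?SC. ?w \<sigma> * (\<Sum>i\<in>G. \<Sum>j\<in>G. Y \<beta> \<sigma> i * D \<sigma> i j))"
    by (simp add: sum.swap[of _ ?SC] sum.swap[of _ ?SC G] sum_distrib_left mult.assoc)
  also have "\<dots> \<le> (\<Sum>\<sigma>\<in>?SC. ?w \<sigma> * (2 * (C * n) * Bd \<beta>))"
  proof (intro sum_mono mult_left_mono)
    fix \<sigma> assume s: "\<sigma> \<in> ?SC"
    show "0 \<le> ?w \<sigma>" unfolding ising_weight_def by simp
    have sa: "\<And>k. k < n \<Longrightarrow> \<bar>\<sigma> k\<bar> \<le> 1" using spin_abs[OF s] by blast
    have "(\<Sum>i\<in>G. \<Sum>j\<in>G. Y \<beta> \<sigma> i * D \<sigma> i j) \<le> (\<Sum>i\<in>G. \<Sum>j\<in>G. \<bar>Y \<beta> \<sigma> i\<bar> * \<bar>D \<sigma> i j\<bar>)"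
      by (intro sum_mono) (metis abs_ge_self abs_mult)
    also have "\<dots> \<le> (\<Sum>i\<in>G. \<Sum>j<n. \<bar>Y \<beta> \<sigma> i\<bar> * \<bar>D \<sigma> i j\<bar>)"
      using G(1) by (intro sum_mono sum_mono2) auto
    also have "\<dots> \<le> (\<Sum>i<n. \<Sum>j<n. \<bar>Y \<beta> \<sigma> i\<bar> * \<bar>D \<sigma> i j\<bar>)"
      using G(1) by (intro sum_mono2) (auto intro: sum_nonneg)
    also have "\<dots> = (\<Sum>i<n. \<bar>Y \<beta> \<sigma> i\<bar> * (\<Sum>j<n. \<bar>D \<sigma> i j\<bar>))" by (simp add: sum_distrib_left)
    also have "\<dots> \<le> (\<Sum>i<n. (2 * \<bar>m \<sigma> i\<bar>) * Bd \<beta>)"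
    proof (rule sum_mono)
      fix i assume i: "i \<in> {..<n}"
      have 1: "\<bar>Y \<beta> \<sigma> i\<bar> \<le> 2 * \<bar>m \<sigma> i\<bar>" using sa i by (intro Y_bd) auto
      have 2: "(\<Sum>j<n. \<bar>D \<sigma> i j\<bar>) \<le> Bd \<beta>" unfolding D_def using i sa b by (intro Y_diff_sum) auto
      show "\<bar>Y \<beta> \<sigma> i\<bar> * (\<Sum>j<n. \<bar>D \<sigma> i j\<bar>) \<le> (2 * \<bar>m \<sigma> i\<bar>) * Bd \<beta>"
        using 1 2 by (intro mult_mono) (auto intro: sum_nonneg)
    qed
    also have "\<dots> = 2 * (\<Sum>i<n. \<bar>m \<sigma> i\<bar>) * Bd \<beta>" by (simp add: sum_distrib_left sum_distrib_right mult.assoc)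
    also have "\<dots> \<le> 2 * (C * n) * Bd \<beta>"
    proof -
      have "Bd \<beta> \<ge> 0" unfolding Bd_def using C0 b by simp
      thus ?thesis using sum_abs_m[OF sa] by (intro mult_right_mono) auto
    qed
    finally show "(\<Sum>i\<in>G. \<Sum>j\<in>G. Y \<beta> \<sigma> i * D \<sigma> i j) \<le> 2 * (C * n) * Bd \<beta>" .
  qed
  also have "\<dots> = (\<Sum>\<sigma>\<in>?SC. ?w \<sigma>) * (2 * (C * n) * Bd \<beta>)" by (simp add: sum_distrib_right)
  finally show ?thesis .
qed

end

lemma ones_mem: "F \<subseteq> {0..<n} \<Longrightarrow> (\<lambda>i. if i < n then 1 else undefined) \<in> spin_configs n F"
  unfolding spin_configs_def by (auto simp: PiE_def Pi_def extensional_def)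

context qctx begin

lemma qf_m: "qf \<sigma> = (\<Sum>i<n. \<sigma> i * m \<sigma> i)"
  unfolding qf_def local_field_def by (simp add: sum_distrib_left mult.assoc)

lemma bilin_sym: "(\<Sum>i<n. \<sigma> i * m \<tau> i) = (\<Sum>i<n. \<tau> i * m \<sigma> i)"
proof -
  have "(\<Sum>i<n. \<sigma> i * m \<tau> i) = (\<Sum>i<n. \<Sum>j<n. \<sigma> i * Q i j * \<tau> j)"
    unfolding local_field_def by (simp add: sum_distrib_left mult.assoc)
  also have "\<dots> = (\<Sum>j<n. \<Sum>i<n. \<sigma> i * Q i j * \<tau> j)" by (rule sum.swap)
  also have "\<dots> = (\<Sum>j<n. \<Sum>i<n. \<tau> j * Q j i * \<sigma> i)"
    using symm by (intro sum.cong refl) (auto simp: algebra_simps)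
  also have "\<dots> = (\<Sum>i<n. \<tau> i * m \<sigma> i)"
    unfolding local_field_def by (simp add: sum_distrib_left mult.assoc)
  finally show ?thesis .
qed

lemma qf_perturb:
  assumes U: "U \<subseteq> {..<n}" and s: "\<And>k. k < n \<Longrightarrow> \<bar>\<sigma> k\<bar> \<le> 1" "\<And>k. k < n \<Longrightarrow> \<bar>\<sigma>' k\<bar> \<le> 1"
    and eq: "\<And>k. k < n \<Longrightarrow> k \<notin> U \<Longrightarrow> \<sigma> k = \<sigma>' k"
  shows "qf \<sigma> - qf \<sigma>' \<le> 4 * C * sqrt (card U) * sqrt n"
proof -
  have "qf \<sigma> - qf \<sigma>' = (\<Sum>i<n. (\<sigma> i - \<sigma>' i) * (m \<sigma> i + m \<sigma>' i))"
  proof -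
    have "(\<Sum>i<n. (\<sigma> i - \<sigma>' i) * (m \<sigma> i + m \<sigma>' i)) =
      (\<Sum>i<n. (\<sigma> i * m \<sigma> i + \<sigma> i * m \<sigma>' i) - (\<sigma>' i * m \<sigma> i + \<sigma>' i * m \<sigma>' i))"
      by (intro sum.cong refl) (simp add: algebra_simps)
    also have "\<dots> = ((\<Sum>i<n. \<sigma> i * m \<sigma> i) + (\<Sum>i<n. \<sigma> i * m \<sigma>' i)) - ((\<Sum>i<n. \<sigma>' i * m \<sigma> i) + (\<Sum>i<n. \<sigma>' i * m \<sigma>' i))"
      by (simp only: sum_subtractf sum.distrib)
    finally show ?thesis unfolding qf_m using bilin_sym[of \<sigma> \<sigma>'] by simp
  qed
  also have "\<dots> = (\<Sum>i\<in>U. (\<sigma> i - \<sigma>' i) * (m \<sigma> i + m \<sigma>' i))"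
  proof -
    have z: "\<forall>i\<in>{..<n} - U. (\<sigma> i - \<sigma>' i) * (m \<sigma> i + m \<sigma>' i) = 0" using eq by auto
    show ?thesis by (rule sum.mono_neutral_right[OF _ U z]) simp
  qed
  also have "\<dots> \<le> (\<Sum>i\<in>U. 2 * (\<bar>m \<sigma> i\<bar> + \<bar>m \<sigma>' i\<bar>))"
  proof (intro sum_mono)
    fix i assume "i \<in> U"
    hence iu: "i < n" using U by auto
    have a1: "\<bar>\<sigma> i\<bar> \<le> 1" by (rule s(1)[OF iu])
    have a2: "\<bar>\<sigma>' i\<bar> \<le> 1" by (rule s(2)[OF iu])
    have "\<bar>\<sigma> i - \<sigma>' i\<bar> \<le> 2" using a1 a2 by linarith
    hence "\<bar>\<sigma> i - \<sigma>' i\<bar> * \<bar>m \<sigma> i + m \<sigma>' i\<bar> \<le> 2 * \<bar>m \<sigma> i + m \<sigma>' i\<bar>"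
      by (rule mult_right_mono) simp
    moreover have "(\<sigma> i - \<sigma>' i) * (m \<sigma> i + m \<sigma>' i) \<le> \<bar>\<sigma> i - \<sigma>' i\<bar> * \<bar>m \<sigma> i + m \<sigma>' i\<bar>"
      by (simp only: abs_mult[symmetric] abs_ge_self)
    ultimately have "(\<sigma> i - \<sigma>' i) * (m \<sigma> i + m \<sigma>' i) \<le> 2 * \<bar>m \<sigma> i + m \<sigma>' i\<bar>"
      by linarith
    thus "(\<sigma> i - \<sigma>' i) * (m \<sigma> i + m \<sigma>' i) \<le> 2 * (\<bar>m \<sigma> i\<bar> + \<bar>m \<sigma>' i\<bar>)"
      using abs_triangle_ineq[of "m \<sigma> i" "m \<sigma>' i"] by (smt (verit))
  qed
  also have "\<dots> = 2 * (\<Sum>i\<in>U. \<bar>m \<sigma> i\<bar>) + 2 * (\<Sum>i\<in>U. \<bar>m \<sigma>' i\<bar>)"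
    by (simp add: sum.distrib sum_distrib_left)
  also have "\<dots> \<le> 2 * (sqrt (card U) * (C * sqrt n)) + 2 * (sqrt (card U) * (C * sqrt n))"
    using sum_abs_m_sub[of U \<sigma>, OF U s(1)] sum_abs_m_sub[of U \<sigma>', OF U s(2)] by linarith
  also have "\<dots> = 4 * C * sqrt (card U) * sqrt n" by simp
  finally show ?thesis .
qed

end

lemma card_SC0: "card (spin_configs n {}) = 2 ^ n"
proof -
  have "spin_configs n {} = PiE {0..<n} (\<lambda>_. {-1, 1::real})" unfolding spin_configs_def by auto
  thus ?thesis by (simp add: card_PiE numeral_2_eq_2)
qed

context qctx begin

definition rU where "rU U \<sigma> = (\<lambda>i. if i \<in> U then \<sigma> i else (0::real))"
definition grp where "grp U \<tau> = {\<sigma> \<in> spin_configs n {}. rU U \<sigma> = \<tau>}"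
definition ov where "ov U \<tau> \<sigma> = (\<lambda>i. if i \<in> U then \<tau> i else \<sigma> i)"

lemma ov_props:
  assumes U: "U \<subseteq> {..<n}" and t: "\<tau> \<in> rU U ` spin_configs n {}" and s: "\<sigma> \<in> spin_configs n {}"
  shows "ov U \<tau> \<sigma> \<in> spin_configs n {}" "rU U (ov U \<tau> \<sigma>) = \<tau>"
proof -
  obtain \<sigma>0 where s0: "\<sigma>0 \<in> spin_configs n {}" and te: "\<tau> = rU U \<sigma>0" using t by auto
  have e: "ov U \<tau> \<sigma> = (\<lambda>i. if i \<in> U then \<sigma>0 i else \<sigma> i)" unfolding ov_def te rU_def by auto
  show "ov U \<tau> \<sigma> \<in> spin_configs n {}" unfolding e using s s0 U
    unfolding spin_configs_def by (auto simp: PiE_def Pi_def extensional_def)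
  show "rU U (ov U \<tau> \<sigma>) = \<tau>" unfolding te rU_def ov_def by auto
qed

lemma ov_inj: "inj_on (ov U \<tau>) (grp U \<tau>')"
proof (rule inj_onI)
  fix x y assume x: "x \<in> grp U \<tau>'" and y: "y \<in> grp U \<tau>'" and e: "ov U \<tau> x = ov U \<tau> y"
  show "x = y"
  proof
    fix i show "x i = y i"
    proof (cases "i \<in> U")
      case True
      have "rU U x i = rU U y i" using x y unfolding grp_def by auto
      thus ?thesis using True unfolding rU_def by simp
    next
      case False thus ?thesis using fun_cong[OF e, of i] unfolding ov_def by simp
    qed
  qed
qed

lemma ov_img:
  assumes U: "U \<subseteq> {..<n}" and t: "\<tau> \<in> rU U ` spin_configs n {}"
  shows "ov U \<tau> ` grp U \<tau>' \<subseteq> grp U \<tau>"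
  using ov_props[OF U t] unfolding grp_def by auto

lemma grp_fin: "finite (grp U \<tau>)"
  unfolding grp_def using spin_fin by simp

lemma card_grp_le:
  assumes U: "U \<subseteq> {..<n}" and t: "\<tau> \<in> rU U ` spin_configs n {}"
  shows "card (grp U \<tau>') \<le> card (grp U \<tau>)"
  by (rule card_inj_on_le[OF ov_inj ov_img[OF U t] grp_fin])

lemma card_grp_eq:
  assumes U: "U \<subseteq> {..<n}" and t: "\<tau> \<in> rU U ` spin_configs n {}" and t': "\<tau>' \<in> rU U ` spin_configs n {}"
  shows "card (grp U \<tau>') = card (grp U \<tau>)"
  using card_grp_le[OF U t, of \<tau>'] card_grp_le[OF U t', of \<tau>] by simp

lemma Zgrp:
  assumes U: "U \<subseteq> {..<n}" and t: "\<tau> \<in> rU U ` spin_configs n {}" and b: "\<beta> \<ge> 0"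
  shows "(\<Sum>\<sigma>\<in>grp U \<tau>'. exp (\<beta> / 2 * qf \<sigma>))
     \<le> exp (2 * \<beta> * C * sqrt (card U) * sqrt n) * (\<Sum>\<sigma>\<in>grp U \<tau>. exp (\<beta> / 2 * qf \<sigma>))"
proof -
  define E where "E = 2 * \<beta> * C * sqrt (card U) * sqrt n"
  have pt: "exp (\<beta> / 2 * qf \<sigma>) \<le> exp E * exp (\<beta> / 2 * qf (ov U \<tau> \<sigma>))" if s: "\<sigma> \<in> grp U \<tau>'" for \<sigma>
  proof -
    have s0: "\<sigma> \<in> spin_configs n {}" using s unfolding grp_def by auto
    have "qf \<sigma> - qf (ov U \<tau> \<sigma>) \<le> 4 * C * sqrt (card U) * sqrt n"
    proof (rule qf_perturb[OF U])
      show "\<And>k. k < n \<Longrightarrow> \<bar>\<sigma> k\<bar> \<le> 1" using spin_abs[OF s0] by blast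
      show "\<And>k. k < n \<Longrightarrow> \<bar>ov U \<tau> \<sigma> k\<bar> \<le> 1" using spin_abs[OF ov_props(1)[OF U t s0]] by blast
      show "\<And>k. k < n \<Longrightarrow> k \<notin> U \<Longrightarrow> \<sigma> k = ov U \<tau> \<sigma> k" unfolding ov_def by simp
    qed
    hence "\<beta> / 2 * qf \<sigma> \<le> E + \<beta> / 2 * qf (ov U \<tau> \<sigma>)"
    proof -
      assume h: "qf \<sigma> - qf (ov U \<tau> \<sigma>) \<le> 4 * C * sqrt (card U) * sqrt n"
      have "\<beta> / 2 * (qf \<sigma> - qf (ov U \<tau> \<sigma>)) \<le> \<beta> / 2 * (4 * C * sqrt (card U) * sqrt n)"
        using b h by (intro mult_left_mono) auto
      thus ?thesis unfolding E_def by (simp add: algebra_simps)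
    qed
    thus ?thesis by (simp add: exp_add[symmetric])
  qed
  have "(\<Sum>\<sigma>\<in>grp U \<tau>'. exp (\<beta> / 2 * qf \<sigma>)) \<le> (\<Sum>\<sigma>\<in>grp U \<tau>'. exp E * exp (\<beta> / 2 * qf (ov U \<tau> \<sigma>)))"
    using pt by (rule sum_mono)
  also have "\<dots> = exp E * (\<Sum>\<sigma>\<in>ov U \<tau> ` grp U \<tau>'. exp (\<beta> / 2 * qf \<sigma>))"
    by (simp add: sum_distrib_left sum.reindex[OF ov_inj])
  also have "\<dots> \<le> exp E * (\<Sum>\<sigma>\<in>grp U \<tau>. exp (\<beta> / 2 * qf \<sigma>))"
    by (intro mult_left_mono sum_mono2 grp_fin ov_img[OF U t]) auto
  finally show ?thesis unfolding E_def .
qed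

lemma grp_group:
  "(\<Sum>\<tau>\<in>rU U ` spin_configs n {}. \<Sum>\<sigma>\<in>grp U \<tau>. f \<sigma>) = (\<Sum>\<sigma>\<in>spin_configs n {}. f \<sigma>)"
  unfolding grp_def by (rule sum.group) (auto simp: spin_fin)

end

context qctx begin

lemma lowtemp:
  assumes U: "U \<subseteq> {..<n}" and FU: "F \<subseteq> U" and mu: "\<And>i. i < n \<Longrightarrow> i \<notin> U \<Longrightarrow> \<mu> i = 0"
    and b: "\<beta> \<ge> 0"
  shows "(\<Sum>\<sigma>\<in>spin_configs n F \<inter> {\<sigma>. qf \<sigma> < d}. ising_weight n \<beta> Q \<mu> \<sigma>)
    \<le> exp (\<beta> / 2 * d) * 2 ^ n * exp (2 * \<beta> * C * sqrt (card U) * sqrt n) / ising_Z n \<beta> Q (\<lambda>_. 0)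
       * (\<Sum>\<sigma>\<in>spin_configs n F. ising_weight n \<beta> Q \<mu> \<sigma>)"
proof -
  let ?SCz = "spin_configs n {}"
  let ?SC = "spin_configs n F"
  let ?w = "ising_weight n \<beta> Q \<mu>"
  let ?e = "\<lambda>\<sigma>. exp (\<beta> / 2 * qf \<sigma>)"
  define E where "E = exp (2 * \<beta> * C * sqrt (card U) * sqrt n)"
  define Z0 where "Z0 = ising_Z n \<beta> Q (\<lambda>_. 0)"
  define R where "R = exp (\<beta> / 2 * d) * 2 ^ n * E / Z0"
  define T where "T = rU U ` ?SCz"
  define N where "N = card T"
  have Z0e: "Z0 = (\<Sum>\<sigma>\<in>?SCz. ?e \<sigma>)" unfolding Z0_def ising_Z_def weight_qf by simp
  have Fn: "F \<subseteq> {0..<n}" using U FU by auto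
  have SCsub: "?SC \<subseteq> ?SCz" unfolding spin_configs_def by auto
  have finT: "finite T" unfolding T_def using spin_fin by simp
  have one: "(\<lambda>i. if i < n then 1 else undefined) \<in> ?SCz" using ones_mem[of "{}" n] by simp
  hence Tne: "T \<noteq> {}" unfolding T_def by auto
  hence Npos: "N > 0" unfolding N_def using finT by (simp add: card_gt_0_iff)
  have Z0pos: "Z0 > 0" unfolding Z0e using one spin_fin
    by (intro sum_pos) auto
  have cardg: "real (2 ^ n) = N * real (card (grp U \<tau>))" if t: "\<tau> \<in> T" for \<tau>
  proof -
    have "real (2 ^ n) = (\<Sum>\<sigma>\<in>?SCz. 1)" using card_SC0[of n] by simp
    also have "\<dots> = (\<Sum>\<tau>'\<in>T. \<Sum>\<sigma>\<in>grp U \<tau>'. 1)" unfolding T_def by (rule grp_group[symmetric])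
    also have "\<dots> = (\<Sum>\<tau>'\<in>T. real (card (grp U \<tau>)))"
      using card_grp_eq[OF U t[unfolded T_def]] unfolding T_def by (intro sum.cong) auto
    finally show ?thesis unfolding N_def by simp
  qed
  have Zb: "Z0 \<le> N * E * (\<Sum>\<sigma>\<in>grp U \<tau>. ?e \<sigma>)" if t: "\<tau> \<in> T" for \<tau>
  proof -
    have "Z0 = (\<Sum>\<tau>'\<in>T. \<Sum>\<sigma>\<in>grp U \<tau>'. ?e \<sigma>)" unfolding Z0e T_def by (rule grp_group[symmetric])
    also have "\<dots> \<le> (\<Sum>\<tau>'\<in>T. E * (\<Sum>\<sigma>\<in>grp U \<tau>. ?e \<sigma>))"
      unfolding E_def using Zgrp[OF U t[unfolded T_def] b] by (intro sum_mono) auto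
    finally show ?thesis unfolding N_def by simp
  qed
  have main: "(\<Sum>\<sigma>\<in>{\<sigma>\<in>?SC \<inter> {\<sigma>. qf \<sigma> < d}. rU U \<sigma> = \<tau>}. ?w \<sigma>) \<le> R * (\<Sum>\<sigma>\<in>{\<sigma>\<in>?SC. rU U \<sigma> = \<tau>}. ?w \<sigma>)"
    if t: "\<tau> \<in> rU U ` ?SC" for \<tau>
  proof -
    obtain \<sigma>0 where s0: "\<sigma>0 \<in> ?SC" and te: "\<tau> = rU U \<sigma>0" using t by auto
    have tT: "\<tau> \<in> T" unfolding T_def using s0 SCsub te by auto
    have g: "{\<sigma>\<in>?SC. rU U \<sigma> = \<tau>} = grp U \<tau>"
    proof -
      { fix \<sigma> assume s: "\<sigma> \<in> grp U \<tau>"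
        have "\<sigma> \<in> ?SC"
        proof -
          have "\<And>i. i \<in> F \<Longrightarrow> \<sigma> i = 1"
          proof -
            fix i assume i: "i \<in> F"
            have "rU U \<sigma> i = rU U \<sigma>0 i" using s te unfolding grp_def by auto
            hence "\<sigma> i = \<sigma>0 i" using FU i unfolding rU_def by auto
            thus "\<sigma> i = 1" using s0 i unfolding spin_configs_def by auto
          qed
          thus ?thesis using s unfolding grp_def spin_configs_def by auto
        qed }
      thus ?thesis using SCsub unfolding grp_def by auto
    qed
    define K where "K = exp (\<Sum>i<n. \<mu> i * \<tau> i)"
    have wK: "?w \<sigma> = K * ?e \<sigma>" if s: "\<sigma> \<in> grp U \<tau>" for \<sigma>
    proof -
      have "(\<Sum>i<n. \<mu> i * \<sigma> i) = (\<Sum>i<n. \<mu> i * \<tau> i)"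
      proof (intro sum.cong refl)
        fix i assume i: "i \<in> {..<n}"
        show "\<mu> i * \<sigma> i = \<mu> i * \<tau> i"
        proof (cases "i \<in> U")
          case True
          have "\<tau> i = rU U \<sigma> i" using s unfolding grp_def by auto
          thus ?thesis using True unfolding rU_def by simp
        next
          case False thus ?thesis using mu i by simp
        qed
      qed
      thus ?thesis unfolding weight_qf K_def by (simp add: exp_add mult.commute)
    qed
    have K0: "K > 0" unfolding K_def by simp
    have "{\<sigma>\<in>?SC \<inter> {\<sigma>. qf \<sigma> < d}. rU U \<sigma> = \<tau>} = grp U \<tau> \<inter> {\<sigma>. qf \<sigma> < d}" using g by auto
    hence "(\<Sum>\<sigma>\<in>{\<sigma>\<in>?SC \<inter> {\<sigma>. qf \<sigma> < d}. rU U \<sigma> = \<tau>}. ?w \<sigma>) = (\<Sum>\<sigma>\<in>grp U \<tau> \<inter> {\<sigma>. qf \<sigma> < d}. K * ?e \<sigma>)"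
      using wK by (auto intro!: sum.cong)
    also have "\<dots> \<le> (\<Sum>\<sigma>\<in>grp U \<tau>. K * exp (\<beta> / 2 * d))"
    proof -
      have "(\<Sum>\<sigma>\<in>grp U \<tau> \<inter> {\<sigma>. qf \<sigma> < d}. K * ?e \<sigma>) \<le> (\<Sum>\<sigma>\<in>grp U \<tau> \<inter> {\<sigma>. qf \<sigma> < d}. K * exp (\<beta> / 2 * d))"
        using K0 b by (intro sum_mono mult_left_mono) (auto intro: mult_left_mono)
      also have "\<dots> \<le> (\<Sum>\<sigma>\<in>grp U \<tau>. K * exp (\<beta> / 2 * d))"
        using K0 by (intro sum_mono2 grp_fin) auto
      finally show ?thesis .
    qed
    also have "\<dots> = K * exp (\<beta> / 2 * d) * card (grp U \<tau>)" by simp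
    also have "card (grp U \<tau>) = 2 ^ n / N" using cardg[OF tT] Npos by (simp add: field_simps)
    also have "K * exp (\<beta> / 2 * d) * (2 ^ n / N) \<le> K * exp (\<beta> / 2 * d) * (2 ^ n * E * (\<Sum>\<sigma>\<in>grp U \<tau>. ?e \<sigma>) / Z0)"
    proof (intro mult_left_mono)
      have "Z0 * (2 ^ n / N) \<le> (N * E * (\<Sum>\<sigma>\<in>grp U \<tau>. ?e \<sigma>)) * (2 ^ n / N)"
        using Zb[OF tT] Npos by (intro mult_right_mono) auto
      also have "\<dots> = 2 ^ n * E * (\<Sum>\<sigma>\<in>grp U \<tau>. ?e \<sigma>)" using Npos by (simp add: field_simps)
      finally show "2 ^ n / N \<le> 2 ^ n * E * (\<Sum>\<sigma>\<in>grp U \<tau>. ?e \<sigma>) / Z0"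
        using Z0pos by (simp add: field_simps)
    qed (use K0 in auto)
    also have "\<dots> = R * (\<Sum>\<sigma>\<in>grp U \<tau>. K * ?e \<sigma>)"
      unfolding R_def by (simp add: sum_distrib_left sum_divide_distrib field_simps)
    also have "\<dots> = R * (\<Sum>\<sigma>\<in>{\<sigma>\<in>?SC. rU U \<sigma> = \<tau>}. ?w \<sigma>)"
      unfolding g using wK by (auto intro!: sum.cong)
    finally show ?thesis .
  qed
  have "(\<Sum>\<sigma>\<in>?SC \<inter> {\<sigma>. qf \<sigma> < d}. ?w \<sigma>) = (\<Sum>\<tau>\<in>rU U ` ?SC. \<Sum>\<sigma>\<in>{\<sigma>\<in>?SC \<inter> {\<sigma>. qf \<sigma> < d}. rU U \<sigma> = \<tau>}. ?w \<sigma>)"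
    by (rule sum.group[symmetric]) (auto simp: spin_fin)
  also have "\<dots> \<le> (\<Sum>\<tau>\<in>rU U ` ?SC. R * (\<Sum>\<sigma>\<in>{\<sigma>\<in>?SC. rU U \<sigma> = \<tau>}. ?w \<sigma>))"
    using main by (rule sum_mono)
  also have "\<dots> = R * (\<Sum>\<sigma>\<in>?SC. ?w \<sigma>)"
    unfolding sum_distrib_left[symmetric] by (subst sum.group) (auto simp: spin_fin)
  finally show ?thesis unfolding R_def E_def Z0_def .
qed

end

lemma gamma_exists:
  fixes b1 b2 a K :: real
  assumes b: "b1 < b2" and a: "0 < a"
  shows "\<exists>\<gamma>>0. \<forall>x. a \<le> x \<and> x \<le> K \<longrightarrow> \<gamma> \<le> tanh (b2 * x) - tanh (b1 * x)"
proof (cases "a \<le> K")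
  case False thus ?thesis by (intro exI[of _ 1]) auto
next
  case True
  have "continuous_on {a..K} (\<lambda>x. tanh (b2 * x) - tanh (b1 * x))"
    by (intro continuous_intros) (auto simp: cosh_real_pos[THEN less_imp_neq, symmetric])
  from continuous_attains_inf[OF compact_Icc _ this] True
  obtain x0 where x0: "x0 \<in> {a..K}" and mn: "\<forall>y\<in>{a..K}. tanh (b2 * x0) - tanh (b1 * x0) \<le> tanh (b2 * y) - tanh (b1 * y)"
    by auto
  have "b1 * x0 < b2 * x0" using x0 a b by (intro mult_strict_right_mono) auto
  hence "tanh (b2 * x0) - tanh (b1 * x0) > 0" by simp
  thus ?thesis using mn by (intro exI[of _ "tanh (b2 * x0) - tanh (b1 * x0)"]) auto
qed

lemma term_abs:
  fixes m b1 b2 :: real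
  shows "m * (tanh (b2 * m) - tanh (b1 * m)) = \<bar>m\<bar> * (tanh (b2 * \<bar>m\<bar>) - tanh (b1 * \<bar>m\<bar>))"
proof (cases "m \<ge> 0")
  case True thus ?thesis by simp
next
  case False
  hence "\<bar>m\<bar> = - m" by simp
  thus ?thesis by (simp add: algebra_simps)
qed

lemma term_nonneg:
  fixes m b1 b2 :: real
  assumes "b1 \<le> b2"
  shows "0 \<le> m * (tanh (b2 * m) - tanh (b1 * m))"
proof -
  have "b1 * \<bar>m\<bar> \<le> b2 * \<bar>m\<bar>" using assms by (intro mult_right_mono) auto
  thus ?thesis unfolding term_abs[of m] by simp
qed

lemma term_lb:
  fixes m b1 b2 a K \<gamma> :: real
  assumes b: "b1 \<le> b2" and g: "\<forall>x. a \<le> x \<and> x \<le> K \<longrightarrow> \<gamma> \<le> tanh (b2 * x) - tanh (b1 * x)" and g0: "\<gamma> \<ge> 0"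
  shows "\<gamma> * (if a \<le> \<bar>m\<bar> \<and> \<bar>m\<bar> \<le> K then \<bar>m\<bar> else 0) \<le> m * (tanh (b2 * m) - tanh (b1 * m))"
proof (cases "a \<le> \<bar>m\<bar> \<and> \<bar>m\<bar> \<le> K")
  case True
  hence "\<gamma> \<le> tanh (b2 * \<bar>m\<bar>) - tanh (b1 * \<bar>m\<bar>)" using g by auto
  hence "\<bar>m\<bar> * \<gamma> \<le> \<bar>m\<bar> * (tanh (b2 * \<bar>m\<bar>) - tanh (b1 * \<bar>m\<bar>))" by (intro mult_left_mono) auto
  thus ?thesis using True unfolding term_abs[of m] by (simp add: mult.commute)
next
  case False
  hence "(if a \<le> \<bar>m\<bar> \<and> \<bar>m\<bar> \<le> K then \<bar>m\<bar> else 0) = 0" by (simp only: if_False)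
  thus ?thesis using term_nonneg[OF b, of m] by simp
qed

lemma abs_split:
  fixes x a K :: real
  assumes "0 < K" "0 \<le> a"
  shows "\<bar>x\<bar> \<le> a + (if a \<le> \<bar>x\<bar> \<and> \<bar>x\<bar> \<le> K then \<bar>x\<bar> else 0) + x\<^sup>2 / K"
proof -
  have q: "x\<^sup>2 / K \<ge> 0" using assms by simp
  show ?thesis
  proof (cases "\<bar>x\<bar> < a")
    case True thus ?thesis using q by auto
  next
    case False
    show ?thesis
    proof (cases "\<bar>x\<bar> \<le> K")
      case True thus ?thesis using False q assms(2) by auto
    next
      case False2: False
      have "\<bar>x\<bar> * K \<le> \<bar>x\<bar> * \<bar>x\<bar>" using False2 by (intro mult_left_mono) auto
      hence "\<bar>x\<bar> \<le> x\<^sup>2 / K" using assms by (simp add: field_simps power2_eq_square)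
      thus ?thesis using False False2 assms(2) by auto
    qed
  qed
qed

lemma gap:
  fixes m :: "nat \<Rightarrow> real" and b1 b2 \<gamma> \<delta> C :: real and n :: nat
  assumes b: "b1 \<le> b2" and d: "\<delta> > 0" and C: "C > 0"
    and g: "\<forall>x. \<delta> / 2 \<le> x \<and> x \<le> 4 * C\<^sup>2 / \<delta> \<longrightarrow> \<gamma> \<le> tanh (b2 * x) - tanh (b1 * x)" and g0: "\<gamma> \<ge> 0"
    and M: "(\<Sum>i<n. (m i)\<^sup>2) \<le> C\<^sup>2 * n" and A: "(\<Sum>i<n. \<bar>m i\<bar>) \<ge> \<delta> * n"
  shows "(\<Sum>i<n. m i * (tanh (b2 * m i) - tanh (b1 * m i))) \<ge> \<gamma> * (\<delta> * n / 4)"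
proof -
  define a where "a = \<delta> / 2"
  define K where "K = 4 * C\<^sup>2 / \<delta>"
  define ind where "ind x = (if a \<le> \<bar>x\<bar> \<and> \<bar>x\<bar> \<le> K then \<bar>x\<bar> else 0)" for x :: real
  have K0: "K > 0" unfolding K_def using d C by simp
  have "(\<Sum>i<n. \<bar>m i\<bar>) \<le> (\<Sum>i<n. a + ind (m i) + (m i)\<^sup>2 / K)"
    unfolding ind_def using K0 d unfolding a_def by (intro sum_mono abs_split) auto
  also have "\<dots> = a * n + (\<Sum>i<n. ind (m i)) + (\<Sum>i<n. (m i)\<^sup>2) / K"
    by (simp add: sum.distrib sum_divide_distrib)
  also have "(\<Sum>i<n. (m i)\<^sup>2) / K \<le> C\<^sup>2 * n / K" using M K0 by (intro divide_right_mono) auto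
  also have "C\<^sup>2 * n / K = \<delta> * n / 4" unfolding K_def using C d by (simp add: field_simps)
  finally have "(\<Sum>i<n. ind (m i)) \<ge> \<delta> * n / 4" using A unfolding a_def by linarith
  hence "\<gamma> * (\<delta> * n / 4) \<le> \<gamma> * (\<Sum>i<n. ind (m i))" using g0 by (intro mult_left_mono) auto
  also have "\<dots> = (\<Sum>i<n. \<gamma> * ind (m i))" by (simp add: sum_distrib_left)
  also have "\<dots> \<le> (\<Sum>i<n. m i * (tanh (b2 * m i) - tanh (b1 * m i)))"
    unfolding ind_def using g unfolding a_def K_def by (intro sum_mono term_lb[OF b _ g0]) auto
  finally show ?thesis .
qed

definition sc :: "nat \<Rightarrow> (nat \<Rightarrow> real) \<Rightarrow> (nat \<Rightarrow> real) \<Rightarrow> real \<Rightarrow> real" where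
  "sc n m \<sigma> b = (\<Sum>i<n. m i * (\<sigma> i - tanh (b * m i)))"

lemma sc_diff: "sc n m \<sigma> b1 - sc n m \<sigma> b2 = (\<Sum>i<n. m i * (tanh (b2 * m i) - tanh (b1 * m i)))"
  unfolding sc_def by (simp add: sum_subtractf[symmetric] algebra_simps)

lemma sc_mono: "b1 \<le> b2 \<Longrightarrow> sc n m \<sigma> b2 \<le> sc n m \<sigma> b1"
  using sc_diff[of n m \<sigma> b1 b2] term_nonneg[of b1 b2] sum_nonneg[of "{..<n}" "\<lambda>i. m i * (tanh (b2 * m i) - tanh (b1 * m i))"]
  by auto

lemma sc_cont: "continuous_on S (sc n m \<sigma>)"
  unfolding sc_def by (intro continuous_intros) (auto simp: cosh_real_pos[THEN less_imp_neq, symmetric])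

lemma root_close:
  fixes bh \<beta> \<eta> :: real
  assumes neg: "sc n m \<sigma> (\<beta> + \<eta>) < 0" and pos: "sc n m \<sigma> (\<beta> - \<eta>) > 0" and eta: "\<eta> > 0"
    and bh: "(\<exists>b. sc n m \<sigma> b = 0) \<Longrightarrow> sc n m \<sigma> bh = 0"
  shows "\<bar>bh - \<beta>\<bar> < \<eta>"
proof -
  have "\<exists>x. \<beta> - \<eta> \<le> x \<and> x \<le> \<beta> + \<eta> \<and> sc n m \<sigma> x = 0"
    using neg pos eta by (intro IVT2' sc_cont) auto
  hence z: "sc n m \<sigma> bh = 0" using bh by blast
  have "\<not> bh \<ge> \<beta> + \<eta>" using sc_mono[of "\<beta> + \<eta>" bh n m \<sigma>] z neg by auto
  moreover have "\<not> bh \<le> \<beta> - \<eta>" using sc_mono[of bh "\<beta> - \<eta>" n m \<sigma>] z pos by auto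
  ultimately show ?thesis by auto
qed

lemma pl_sc: "pl_score n Q \<sigma> b = (1 / real n) * sc n (local_field n Q \<sigma>) \<sigma> b"
  unfolding pl_score_def sc_def ..

context qctx begin

lemma good_event:
  assumes n: "n > 0" and Cp: "C > 0" and bp: "\<beta> > 0" and eta: "\<eta> > 0" and d: "\<delta> > 0"
    and g0: "\<gamma> > 0"
    and g1: "\<forall>x. \<delta> / 2 \<le> x \<and> x \<le> 4 * C\<^sup>2 / \<delta> \<longrightarrow> \<gamma> \<le> tanh ((\<beta> + \<eta>) * x) - tanh (\<beta> * x)"
    and g2: "\<forall>x. \<delta> / 2 \<le> x \<and> x \<le> 4 * C\<^sup>2 / \<delta> \<longrightarrow> \<gamma> \<le> tanh (\<beta> * x) - tanh ((\<beta> - \<eta>) * x)"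
    and eps: "\<epsilon> = \<gamma> * \<delta> / 16"
    and U: "U \<subseteq> {..<n}" and small: "2 * (sqrt (card U) * (C * sqrt n)) \<le> \<epsilon> * n"
    and s: "\<sigma> \<in> spin_configs n F"
    and bh: "(\<exists>b. pl_score n Q \<sigma> b = 0) \<Longrightarrow> pl_score n Q \<sigma> bh = 0"
    and q: "qf \<sigma> \<ge> \<delta> * n" and T: "\<bar>\<Sum>i\<in>{..<n} - U. Y \<beta> \<sigma> i\<bar> \<le> \<epsilon> * n"
  shows "\<bar>bh - \<beta>\<bar> < \<eta>"
proof -
  have sa: "\<And>k. k < n \<Longrightarrow> \<bar>\<sigma> k\<bar> \<le> 1" using spin_abs[OF s] by blast
  have M: "(\<Sum>i<n. (m \<sigma> i)\<^sup>2) \<le> C\<^sup>2 * n" using sa by (rule sumsq_m_spin)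
  have "qf \<sigma> \<le> (\<Sum>i<n. \<bar>m \<sigma> i\<bar>)"
  proof -
    have "qf \<sigma> = (\<Sum>i<n. \<sigma> i * m \<sigma> i)" by (rule qf_m)
    also have "\<dots> \<le> (\<Sum>i<n. \<bar>m \<sigma> i\<bar>)"
    proof (intro sum_mono)
      fix i assume "i \<in> {..<n}"
      hence "\<bar>\<sigma> i\<bar> \<le> 1" using sa by auto
      hence "\<bar>\<sigma> i * m \<sigma> i\<bar> \<le> \<bar>m \<sigma> i\<bar>" by (simp add: abs_mult mult_left_le_one_le)
      thus "\<sigma> i * m \<sigma> i \<le> \<bar>m \<sigma> i\<bar>" by linarith
    qed
    finally show ?thesis .
  qed
  hence A: "(\<Sum>i<n. \<bar>m \<sigma> i\<bar>) \<ge> \<delta> * n" using q by linarith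
  have gap1: "sc n (m \<sigma>) \<sigma> \<beta> - sc n (m \<sigma>) \<sigma> (\<beta> + \<eta>) \<ge> \<gamma> * (\<delta> * n / 4)"
    unfolding sc_diff using eta d Cp g1 g0 M A by (intro gap) auto
  have gap2: "sc n (m \<sigma>) \<sigma> (\<beta> - \<eta>) - sc n (m \<sigma>) \<sigma> \<beta> \<ge> \<gamma> * (\<delta> * n / 4)"
    unfolding sc_diff using eta d Cp g2 g0 M A by (intro gap) auto
  have split: "sc n (m \<sigma>) \<sigma> \<beta> = (\<Sum>i\<in>{..<n} - U. Y \<beta> \<sigma> i) + (\<Sum>i\<in>U. Y \<beta> \<sigma> i)"
  proof -
    have "sc n (m \<sigma>) \<sigma> \<beta> = (\<Sum>i<n. Y \<beta> \<sigma> i)" unfolding sc_def Y_def ..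
    also have "\<dots> = (\<Sum>i\<in>({..<n} - U) \<union> U. Y \<beta> \<sigma> i)" using U by (intro sum.cong) auto
    also have "\<dots> = (\<Sum>i\<in>{..<n} - U. Y \<beta> \<sigma> i) + (\<Sum>i\<in>U. Y \<beta> \<sigma> i)"
      using U finite_subset by (intro sum.union_disjoint) auto
    finally show ?thesis .
  qed
  have "\<bar>\<Sum>i\<in>U. Y \<beta> \<sigma> i\<bar> \<le> (\<Sum>i\<in>U. 2 * \<bar>m \<sigma> i\<bar>)"
    using sa U by (intro order_trans[OF sum_abs] sum_mono Y_bd) auto
  also have "\<dots> \<le> 2 * (sqrt (card U) * (C * sqrt n))"
    using sum_abs_m_sub[of U \<sigma>, OF U sa] by (simp add: sum_distrib_left[symmetric])
  finally have R: "\<bar>\<Sum>i\<in>U. Y \<beta> \<sigma> i\<bar> \<le> \<epsilon> * n" using small by linarith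
  have key: "\<gamma> * (\<delta> * n / 4) = 4 * (\<epsilon> * n)" unfolding eps by simp
  have en: "\<epsilon> * n > 0" unfolding eps using g0 d n by simp
  have neg: "sc n (m \<sigma>) \<sigma> (\<beta> + \<eta>) < 0" using gap1 split T R key en by linarith
  have pos: "sc n (m \<sigma>) \<sigma> (\<beta> - \<eta>) > 0" using gap2 split T R key en by linarith
  show ?thesis
  proof (rule root_close[OF neg pos eta])
    assume "\<exists>b. sc n (m \<sigma>) \<sigma> b = 0"
    hence "\<exists>b. pl_score n Q \<sigma> b = 0" unfolding pl_sc by auto
    thus "sc n (m \<sigma>) \<sigma> bh = 0" using bh n unfolding pl_sc by simp
  qed
qed

end

context qctx begin

lemma prob_bound:
  assumes n: "n > 0" and Cp: "C > 0" and bp: "\<beta> > 0" and eta: "\<eta> > 0" and d: "\<delta> > 0"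
    and g0: "\<gamma> > 0"
    and g1: "\<forall>x. \<delta> / 2 \<le> x \<and> x \<le> 4 * C\<^sup>2 / \<delta> \<longrightarrow> \<gamma> \<le> tanh ((\<beta> + \<eta>) * x) - tanh (\<beta> * x)"
    and g2: "\<forall>x. \<delta> / 2 \<le> x \<and> x \<le> 4 * C\<^sup>2 / \<delta> \<longrightarrow> \<gamma> \<le> tanh (\<beta> * x) - tanh ((\<beta> - \<eta>) * x)"
    and eps: "\<epsilon> = \<gamma> * \<delta> / 16"
    and F: "F \<subseteq> {..<n}"
    and Ud: "U = F \<union> {i. i < n \<and> \<mu> i \<noteq> 0}"
    and small: "2 * (sqrt (card U) * (C * sqrt n)) \<le> \<epsilon> * n"
    and bh: "\<And>\<sigma>. (\<exists>b. pl_score n Q \<sigma> b = 0) \<Longrightarrow> pl_score n Q \<sigma> (bh \<sigma>) = 0"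
  shows "ising_prob n \<beta> Q \<mu> F {\<sigma>. \<bar>bh \<sigma> - \<beta>\<bar> > \<eta>}
     \<le> exp (\<beta> / 2 * (\<delta> * n)) * 2 ^ n * exp (2 * \<beta> * C * sqrt (card U) * sqrt n) / ising_Z n \<beta> Q (\<lambda>_. 0)
       + 2 * (C * n) * Bd \<beta> / (\<epsilon> * n)\<^sup>2"
proof -
  let ?SC = "spin_configs n F"
  let ?w = "ising_weight n \<beta> Q \<mu>"
  let ?T = "\<lambda>\<sigma>. \<Sum>i\<in>{..<n} - U. Y \<beta> \<sigma> i"
  define R1 where "R1 = exp (\<beta> / 2 * (\<delta> * n)) * 2 ^ n * exp (2 * \<beta> * C * sqrt (card U) * sqrt n) / ising_Z n \<beta> Q (\<lambda>_. 0)"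
  define R2 where "R2 = 2 * (C * n) * Bd \<beta> / (\<epsilon> * n)\<^sup>2"
  define W where "W = (\<Sum>\<sigma>\<in>?SC. ?w \<sigma>)"
  have U: "U \<subseteq> {..<n}" using F Ud by auto
  have w0: "\<And>\<sigma>. ?w \<sigma> \<ge> 0" unfolding ising_weight_def by simp
  have en: "\<epsilon> * n > 0" unfolding eps using g0 d n by simp
  have fin: "finite ?SC" by (rule spin_fin)
  have incl: "?SC \<inter> {\<sigma>. \<bar>bh \<sigma> - \<beta>\<bar> > \<eta>} \<subseteq> (?SC \<inter> {\<sigma>. qf \<sigma> < \<delta> * n}) \<union> (?SC \<inter> {\<sigma>. \<bar>?T \<sigma>\<bar> > \<epsilon> * n})"
  proof
    fix \<sigma> assume a: "\<sigma> \<in> ?SC \<inter> {\<sigma>. \<bar>bh \<sigma> - \<beta>\<bar> > \<eta>}"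
    show "\<sigma> \<in> (?SC \<inter> {\<sigma>. qf \<sigma> < \<delta> * n}) \<union> (?SC \<inter> {\<sigma>. \<bar>?T \<sigma>\<bar> > \<epsilon> * n})"
    proof (rule ccontr)
      assume "\<not> ?thesis"
      hence q: "qf \<sigma> \<ge> \<delta> * n" and T: "\<bar>?T \<sigma>\<bar> \<le> \<epsilon> * n" using a by auto
      have "\<bar>bh \<sigma> - \<beta>\<bar> < \<eta>"
        by (rule good_event[OF n Cp bp eta d g0 g1 g2 eps U small _ bh q T]) (use a in auto)
      thus False using a by auto
    qed
  qed
  have "(\<Sum>\<sigma>\<in>?SC \<inter> {\<sigma>. \<bar>bh \<sigma> - \<beta>\<bar> > \<eta>}. ?w \<sigma>)
      \<le> (\<Sum>\<sigma>\<in>(?SC \<inter> {\<sigma>. qf \<sigma> < \<delta> * n}) \<union> (?SC \<inter> {\<sigma>. \<bar>?T \<sigma>\<bar> > \<epsilon> * n}). ?w \<sigma>)"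
    using fin incl w0 by (intro sum_mono2) auto
  also have "\<dots> \<le> (\<Sum>\<sigma>\<in>?SC \<inter> {\<sigma>. qf \<sigma> < \<delta> * n}. ?w \<sigma>) + (\<Sum>\<sigma>\<in>?SC \<inter> {\<sigma>. \<bar>?T \<sigma>\<bar> > \<epsilon> * n}. ?w \<sigma>)"
  proof -
    have "(\<Sum>\<sigma>\<in>(?SC \<inter> {\<sigma>. qf \<sigma> < \<delta> * n}) \<union> (?SC \<inter> {\<sigma>. \<bar>?T \<sigma>\<bar> > \<epsilon> * n}). ?w \<sigma>)
      = (\<Sum>\<sigma>\<in>?SC \<inter> {\<sigma>. qf \<sigma> < \<delta> * n}. ?w \<sigma>) + (\<Sum>\<sigma>\<in>?SC \<inter> {\<sigma>. \<bar>?T \<sigma>\<bar> > \<epsilon> * n}. ?w \<sigma>)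
        - (\<Sum>\<sigma>\<in>(?SC \<inter> {\<sigma>. qf \<sigma> < \<delta> * n}) \<inter> (?SC \<inter> {\<sigma>. \<bar>?T \<sigma>\<bar> > \<epsilon> * n}). ?w \<sigma>)"
      using fin by (intro sum_Un) auto
    moreover have "(\<Sum>\<sigma>\<in>(?SC \<inter> {\<sigma>. qf \<sigma> < \<delta> * n}) \<inter> (?SC \<inter> {\<sigma>. \<bar>?T \<sigma>\<bar> > \<epsilon> * n}). ?w \<sigma>) \<ge> 0"
      using w0 by (intro sum_nonneg) auto
    ultimately show ?thesis by linarith
  qed
  also have "(\<Sum>\<sigma>\<in>?SC \<inter> {\<sigma>. qf \<sigma> < \<delta> * n}. ?w \<sigma>) \<le> R1 * W"
    unfolding R1_def W_def using U Ud bp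
    by (intro lowtemp[of U F \<mu> \<beta> "\<delta> * n"]) auto
  also have "(\<Sum>\<sigma>\<in>?SC \<inter> {\<sigma>. \<bar>?T \<sigma>\<bar> > \<epsilon> * n}. ?w \<sigma>) \<le> R2 * W"
  proof -
    have "(\<Sum>\<sigma>\<in>?SC \<inter> {\<sigma>. \<bar>?T \<sigma>\<bar> > \<epsilon> * n}. ?w \<sigma>) \<le> (\<Sum>\<sigma>\<in>?SC \<inter> {\<sigma>. \<bar>?T \<sigma>\<bar> > \<epsilon> * n}. ?w \<sigma> * (?T \<sigma>)\<^sup>2 / (\<epsilon> * n)\<^sup>2)"
    proof (intro sum_mono)
      fix \<sigma> assume "\<sigma> \<in> ?SC \<inter> {\<sigma>. \<bar>?T \<sigma>\<bar> > \<epsilon> * n}"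
      hence "\<bar>?T \<sigma>\<bar> > \<epsilon> * n" by auto
      hence "(\<epsilon> * n)\<^sup>2 \<le> (?T \<sigma>)\<^sup>2" using en
        by (metis abs_le_square_iff abs_of_pos less_imp_le)
      moreover have "(\<epsilon> * n)\<^sup>2 > 0" using en by (intro zero_less_power) 
      ultimately have "1 \<le> (?T \<sigma>)\<^sup>2 / (\<epsilon> * n)\<^sup>2" by (simp add: le_divide_eq)
      thus "?w \<sigma> \<le> ?w \<sigma> * (?T \<sigma>)\<^sup>2 / (\<epsilon> * n)\<^sup>2"
        using w0[of \<sigma>] by (metis mult_left_mono mult.right_neutral times_divide_eq_right)
    qed
    also have "\<dots> \<le> (\<Sum>\<sigma>\<in>?SC. ?w \<sigma> * (?T \<sigma>)\<^sup>2 / (\<epsilon> * n)\<^sup>2)"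
      using fin w0 by (intro sum_mono2) auto
    also have "\<dots> = (\<Sum>\<sigma>\<in>?SC. ?w \<sigma> * (?T \<sigma>)\<^sup>2) / (\<epsilon> * n)\<^sup>2" by (simp add: sum_divide_distrib)
    also have "\<dots> \<le> W * (2 * (C * n) * Bd \<beta>) / (\<epsilon> * n)\<^sup>2"
      unfolding W_def using Ud bp
      by (intro divide_right_mono second_moment) auto
    finally show ?thesis unfolding R2_def by (simp add: mult.commute)
  qed
  finally have num: "(\<Sum>\<sigma>\<in>?SC \<inter> {\<sigma>. \<bar>bh \<sigma> - \<beta>\<bar> > \<eta>}. ?w \<sigma>) \<le> (R1 + R2) * W"
    by (simp add: algebra_simps)
  have W0: "W \<ge> 0" unfolding W_def using w0 by (intro sum_nonneg) auto
  have R0: "R1 + R2 \<ge> 0"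
  proof -
    have "ising_Z n \<beta> Q (\<lambda>_. 0) \<ge> 0" unfolding ising_Z_def ising_weight_def by (intro sum_nonneg) auto
    moreover have "Bd \<beta> \<ge> 0" unfolding Bd_def using C0 bp by simp
    ultimately show ?thesis unfolding R1_def R2_def using C0 by simp
  qed
  have "ising_prob n \<beta> Q \<mu> F {\<sigma>. \<bar>bh \<sigma> - \<beta>\<bar> > \<eta>} = (\<Sum>\<sigma>\<in>?SC \<inter> {\<sigma>. \<bar>bh \<sigma> - \<beta>\<bar> > \<eta>}. ?w \<sigma>) / W"
    unfolding ising_prob_def W_def ..
  also have "\<dots> \<le> R1 + R2"
  proof (cases "W = 0")
    case True thus ?thesis using R0 by simp
  next
    case False thus ?thesis using num W0 by (simp add: divide_le_eq mult.commute)
  qed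
  finally show ?thesis unfolding R1_def R2_def .
qed

end

lemma prob_nonneg: "ising_prob n \<beta> Q \<mu> F A \<ge> 0"
  unfolding ising_prob_def ising_weight_def by (intro divide_nonneg_nonneg sum_nonneg) auto

lemma prob_le1: "ising_prob n \<beta> Q \<mu> F A \<le> 1"
proof -
  have "(\<Sum>\<sigma>\<in>spin_configs n F \<inter> A. ising_weight n \<beta> Q \<mu> \<sigma>) \<le> (\<Sum>\<sigma>\<in>spin_configs n F. ising_weight n \<beta> Q \<mu> \<sigma>)"
    using spin_fin unfolding ising_weight_def by (intro sum_mono2) auto
  moreover have "0 \<le> (\<Sum>\<sigma>\<in>spin_configs n F. ising_weight n \<beta> Q \<mu> \<sigma>)"
    unfolding ising_weight_def by (intro sum_nonneg) auto
  ultimately show ?thesis unfolding ising_prob_def by (auto simp: divide_le_eq_1)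
qed

lemma Z_pos: "ising_Z n \<beta> Q \<mu> > 0"
  unfolding ising_Z_def ising_weight_def using spin_fin ones_mem[of "{}" n]
  by (intro sum_pos) auto

lemma zero_sparse: "(\<lambda>_. 0) \<in> sparse_fields n s"
  unfolding sparse_fields_def by simp

lemma bound_tendsto:
  fixes c K :: real assumes "c > 0"
  shows "(\<lambda>n. exp (- (c / 4) * real n) + K / sqrt (real n)) \<longlonglongrightarrow> 0"
  using assms by real_asymp

lemma main_gen:
  fixes Q :: "nat \<Rightarrow> nat \<Rightarrow> nat \<Rightarrow> real"
    and \<beta> :: real
    and s :: "nat \<Rightarrow> nat"
    and betahat :: "nat \<Rightarrow> (nat \<Rightarrow> real) \<Rightarrow> real"
    and S1 :: "nat \<Rightarrow> nat set" and \<eta> :: real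
  assumes symm: "\<And>n i j. i < n \<Longrightarrow> j < n \<Longrightarrow> Q n i j = Q n j i"
    and diag: "\<And>n i. i < n \<Longrightarrow> Q n i i = 0"
    and opbd: "\<exists>C. \<forall>n. mat_opnorm n (Q n) \<le> C"
    and beta_pos: "\<beta> > 0"
    and high_temp_fail: "liminf (\<lambda>n. ereal ((1 / real n) * ln (ising_Z n \<beta> (Q n) (\<lambda>_. 0) / 2 ^ n))) > 0"
    and mple: "\<And>n \<sigma>. (\<exists>b. pl_score n (Q n) \<sigma> b = 0) \<Longrightarrow> pl_score n (Q n) \<sigma> (betahat n \<sigma>) = 0"
    and s_small: "(\<lambda>n. real (s n) / real n) \<longlonglongrightarrow> 0"
    and S1sub: "\<forall>n. S1 n \<subseteq> {0..<n}"
    and S1small: "(\<lambda>n. real (card (S1 n)) / real n) \<longlonglongrightarrow> 0"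
    and eta: "\<eta> > 0"
  shows "(\<lambda>n. SUP \<mu>\<in>sparse_fields n (s n).
             ising_prob n \<beta> (Q n) \<mu> (S1 n) {\<sigma>. \<bar>betahat n \<sigma> - \<beta>\<bar> > \<eta>}) \<longlonglongrightarrow> 0"
proof -
  obtain C0 where C0: "\<forall>n. mat_opnorm n (Q n) \<le> C0" using opbd by blast
  define C where "C = max C0 1"
  have Cp: "C > 0" unfolding C_def by simp
  have q: "qctx n (Q n) C" for n
    by unfold_locales (use symm diag C0 in \<open>auto simp: C_def intro: order_trans\<close>)
  define f where "f n = (1 / real n) * ln (ising_Z n \<beta> (Q n) (\<lambda>_. 0) / 2 ^ n)" for n
  obtain c where cp: "c > 0" and evc: "eventually (\<lambda>n. c < f n) sequentially"
  proof -
    from ereal_dense2[OF high_temp_fail] obtain z where z0: "0 < ereal z"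
      and zl: "ereal z < liminf (\<lambda>n. ereal (f n))" unfolding f_def by blast
    have "eventually (\<lambda>n. ereal z < ereal (f n)) sequentially" by (rule less_LiminfD[OF zl])
    hence "eventually (\<lambda>n. z < f n) sequentially" by simp
    moreover have "z > 0" using z0 by simp
    ultimately show ?thesis using that by blast
  qed
  define \<delta> where "\<delta> = c / \<beta>"
  have dp: "\<delta> > 0" unfolding \<delta>_def using cp beta_pos by simp
  obtain \<gamma>1 where g1p: "\<gamma>1 > 0" and g1: "\<forall>x. \<delta> / 2 \<le> x \<and> x \<le> 4 * C\<^sup>2 / \<delta> \<longrightarrow> \<gamma>1 \<le> tanh ((\<beta> + \<eta>) * x) - tanh (\<beta> * x)"
    using gamma_exists[of \<beta> "\<beta> + \<eta>" "\<delta> / 2" "4 * C\<^sup>2 / \<delta>"] eta dp by auto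
  obtain \<gamma>2 where g2p: "\<gamma>2 > 0" and g2: "\<forall>x. \<delta> / 2 \<le> x \<and> x \<le> 4 * C\<^sup>2 / \<delta> \<longrightarrow> \<gamma>2 \<le> tanh (\<beta> * x) - tanh ((\<beta> - \<eta>) * x)"
    using gamma_exists[of "\<beta> - \<eta>" \<beta> "\<delta> / 2" "4 * C\<^sup>2 / \<delta>"] eta dp by auto
  define \<gamma> where "\<gamma> = min \<gamma>1 \<gamma>2"
  have gp: "\<gamma> > 0" unfolding \<gamma>_def using g1p g2p by simp
  have g1': "\<forall>x. \<delta> / 2 \<le> x \<and> x \<le> 4 * C\<^sup>2 / \<delta> \<longrightarrow> \<gamma> \<le> tanh ((\<beta> + \<eta>) * x) - tanh (\<beta> * x)"
    using g1 unfolding \<gamma>_def by force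
  have g2': "\<forall>x. \<delta> / 2 \<le> x \<and> x \<le> 4 * C\<^sup>2 / \<delta> \<longrightarrow> \<gamma> \<le> tanh (\<beta> * x) - tanh ((\<beta> - \<eta>) * x)"
    using g2 unfolding \<gamma>_def by force
  define \<epsilon> where "\<epsilon> = \<gamma> * \<delta> / 16"
  have ep: "\<epsilon> > 0" unfolding \<epsilon>_def using gp dp by simp
  define u where "u n = real (s n + card (S1 n))" for n
  have ulim: "(\<lambda>n. u n / real n) \<longlonglongrightarrow> 0"
  proof -
    have "(\<lambda>n. real (s n) / real n + real (card (S1 n)) / real n) \<longlonglongrightarrow> 0 + 0"
      by (intro tendsto_add s_small S1small)
    thus ?thesis unfolding u_def by (simp add: add_divide_distrib)
  qed
  define th where "th = min ((\<epsilon> / (2 * C))\<^sup>2) ((c / (8 * \<beta> * C))\<^sup>2)"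
  have thp: "th > 0" unfolding th_def using ep Cp cp beta_pos by simp
  have evu: "eventually (\<lambda>n. u n / real n < th) sequentially"
    using order_tendstoD(2)[OF ulim thp] .
  define K where "K = 2 * C * (3 * C + 2 * \<beta> * C\<^sup>2) / \<epsilon>\<^sup>2"
  define b where "b n = exp (- (c / 4) * real n) + K / sqrt (real n)" for n
  let ?P = "\<lambda>n \<mu>. ising_prob n \<beta> (Q n) \<mu> (S1 n) {\<sigma>. \<bar>betahat n \<sigma> - \<beta>\<bar> > \<eta>}"
  have perN: "?P n \<mu> \<le> b n" if n: "n > 0" and fn: "c < f n" and un: "u n / real n < th"
      and mu: "\<mu> \<in> sparse_fields n (s n)" for n \<mu>
  proof -
    interpret qctx n "Q n" C by (rule q)
    define U where "U = S1 n \<union> {i. i < n \<and> \<mu> i \<noteq> 0}"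
    have S1n: "S1 n \<subseteq> {..<n}" using S1sub by (metis atLeast0LessThan)
    have finS: "finite (S1 n)" using S1n finite_subset by blast
    have cU: "real (card U) \<le> u n"
    proof -
      have "card U \<le> card (S1 n) + card {i. i < n \<and> \<mu> i \<noteq> 0}" unfolding U_def by (rule card_Un_le)
      also have "card {i. i < n \<and> \<mu> i \<noteq> 0} \<le> s n" using mu unfolding sparse_fields_def by auto
      finally show ?thesis unfolding u_def by simp
    qed
    define v where "v = sqrt (u n / real n)"
    have nr: "real n > 0" using n by simp
    have v0: "v \<ge> 0" unfolding v_def using nr by (simp add: u_def)
    have vt: "v\<^sup>2 < th" unfolding v_def using un nr by (simp add: u_def)
    have v1: "v < \<epsilon> / (2 * C)"
    proof -
      have a: "v ^ 2 < (\<epsilon> / (2 * C)) ^ 2" using vt unfolding th_def by linarith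
      have b: "0 \<le> \<epsilon> / (2 * C)" using ep Cp by simp
      show ?thesis by (rule power_less_imp_less_base[OF a b])
    qed
    have v2: "v < c / (8 * \<beta> * C)"
    proof -
      have a: "v ^ 2 < (c / (8 * \<beta> * C)) ^ 2" using vt unfolding th_def by linarith
      have b: "0 \<le> c / (8 * \<beta> * C)" using cp Cp beta_pos by simp
      show ?thesis by (rule power_less_imp_less_base[OF a b])
    qed
    have sq: "sqrt (card U) * sqrt n \<le> n * v"
    proof -
      have "sqrt (card U) \<le> sqrt (u n)" using cU by (rule real_sqrt_le_mono)
      hence "sqrt (card U) * sqrt n \<le> sqrt (u n) * sqrt n" by (rule mult_right_mono) simp
      also have "sqrt (u n) * sqrt n = n * v"
      proof -
        have "sqrt (u n / real n) * real n = sqrt (u n) / sqrt n * (sqrt n * sqrt n)"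
          using nr by (simp add: real_sqrt_divide)
        also have "\<dots> = sqrt (u n) * sqrt n" using nr by (simp add: field_simps)
        finally show ?thesis unfolding v_def by (simp add: mult.commute)
      qed
      finally show ?thesis .
    qed
    have small: "2 * (sqrt (card U) * (C * sqrt n)) \<le> \<epsilon> * n"
    proof -
      have "2 * (sqrt (card U) * (C * sqrt n)) = 2 * C * (sqrt (card U) * sqrt n)" by simp
      also have "\<dots> \<le> 2 * C * (n * v)" using sq Cp by (intro mult_left_mono) auto
      also have "\<dots> = n * (2 * C * v)" by simp
      also have "\<dots> \<le> n * \<epsilon>" using v1 Cp nr by (intro mult_left_mono) (auto simp: field_simps)
      finally show ?thesis by (simp add: mult.commute)
    qed
    have pb: "?P n \<mu> \<le> exp (\<beta> / 2 * (\<delta> * n)) * 2 ^ n * exp (2 * \<beta> * C * sqrt (card U) * sqrt n) / ising_Z n \<beta> (Q n) (\<lambda>_. 0)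
       + 2 * (C * n) * Bd \<beta> / (\<epsilon> * n)\<^sup>2"
      by (rule prob_bound[OF n Cp beta_pos eta dp gp g1' g2' \<epsilon>_def S1n U_def small mple])
    define Z where "Z = ising_Z n \<beta> (Q n) (\<lambda>_. 0)"
    have Zp: "Z > 0" unfolding Z_def by (rule Z_pos)
    have Zb: "Z > 2 ^ n * exp (c * n)"
    proof -
      have "c * n < ln (Z / 2 ^ n)" using fn nr unfolding f_def Z_def by (simp add: field_simps)
      hence "exp (c * n) < exp (ln (Z / 2 ^ n))" by simp
      moreover have "Z / 2 ^ n > 0" using Zp by simp
      ultimately have "exp (c * n) < Z / 2 ^ n" by simp
      thus ?thesis by (simp add: field_simps)
    qed
    have t1: "exp (\<beta> / 2 * (\<delta> * n)) * 2 ^ n * exp (2 * \<beta> * C * sqrt (card U) * sqrt n) / Z \<le> exp (- (c / 4) * real n)"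
    proof -
      have e1: "\<beta> / 2 * (\<delta> * n) = c * n / 2" unfolding \<delta>_def using beta_pos by simp
      have "2 * \<beta> * C * sqrt (card U) * sqrt n = 2 * \<beta> * C * (sqrt (card U) * sqrt n)" by simp
      also have "\<dots> \<le> 2 * \<beta> * C * (n * v)" using sq beta_pos Cp by (intro mult_left_mono) auto
      also have "\<dots> = n * (2 * \<beta> * C * v)" by simp
      also have "\<dots> \<le> n * (c / 4)"
      proof (intro mult_left_mono)
        have "2 * \<beta> * C * v \<le> 2 * \<beta> * C * (c / (8 * \<beta> * C))" using v2 beta_pos Cp by (intro mult_left_mono) auto
        also have "\<dots> = c / 4" using beta_pos Cp by (simp add: field_simps)
        finally show "2 * \<beta> * C * v \<le> c / 4" .
      qed auto
      finally have e2: "2 * \<beta> * C * sqrt (card U) * sqrt n \<le> c * n / 4" by (simp add: mult.commute)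
      have "exp (\<beta> / 2 * (\<delta> * n)) * 2 ^ n * exp (2 * \<beta> * C * sqrt (card U) * sqrt n)
            \<le> exp (c * n / 2) * 2 ^ n * exp (c * n / 4)"
        unfolding e1 using e2 by (intro mult_left_mono) auto
      also have "\<dots> = exp (- (c / 4) * real n) * (2 ^ n * exp (c * n))"
        by (simp add: exp_add[symmetric] field_simps)
      also have "\<dots> \<le> exp (- (c / 4) * real n) * Z" using Zb by (intro mult_left_mono) auto
      finally show ?thesis using Zp by (simp add: divide_le_eq)
    qed
    have t2: "2 * (C * n) * Bd \<beta> / (\<epsilon> * n)\<^sup>2 \<le> K / sqrt n"
    proof -
      have sn1: "sqrt n \<ge> 1" using n by simp
      have "Bd \<beta> \<le> (3 * C + 2 * \<beta> * C\<^sup>2) * sqrt n"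
      proof -
        have "\<beta> * C\<^sup>2 * 1 \<le> \<beta> * C\<^sup>2 * sqrt n" using sn1 beta_pos by (intro mult_left_mono) auto
        thus ?thesis unfolding Bd_def by (simp add: algebra_simps)
      qed
      hence "2 * (C * n) * Bd \<beta> \<le> 2 * (C * n) * ((3 * C + 2 * \<beta> * C\<^sup>2) * sqrt n)"
        using Cp nr by (intro mult_left_mono) auto
      hence "2 * (C * n) * Bd \<beta> / (\<epsilon> * n)\<^sup>2 \<le> 2 * (C * n) * ((3 * C + 2 * \<beta> * C\<^sup>2) * sqrt n) / (\<epsilon> * n)\<^sup>2"
        by (intro divide_right_mono) auto
      also have "\<dots> = K / sqrt n"
      proof -
        define r where "r = sqrt (real n)"
        have rp: "r > 0" unfolding r_def using nr by simp
        have nr2: "real n = r * r" unfolding r_def using nr by simp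
        show ?thesis unfolding K_def nr2 r_def[symmetric] using rp ep
          by (simp add: field_simps power2_eq_square)
      qed
      finally show ?thesis .
    qed
    show ?thesis using pb t1 t2 unfolding b_def Z_def by linarith
  qed
  have ev: "eventually (\<lambda>n. \<forall>\<mu>\<in>sparse_fields n (s n). ?P n \<mu> \<le> b n) sequentially"
    using evc evu eventually_gt_at_top[of 0] by eventually_elim (use perN in blast)
  have lo: "eventually (\<lambda>n. 0 \<le> (SUP \<mu>\<in>sparse_fields n (s n). ?P n \<mu>)) sequentially"
  proof (intro always_eventually allI)
    fix n
    have "0 \<le> ?P n (\<lambda>_. 0)" by (rule prob_nonneg)
    also have "\<dots> \<le> (SUP \<mu>\<in>sparse_fields n (s n). ?P n \<mu>)"
      using zero_sparse prob_le1 by (intro cSUP_upper bdd_aboveI2) auto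
    finally show "0 \<le> (SUP \<mu>\<in>sparse_fields n (s n). ?P n \<mu>)" .
  qed
  have hi: "eventually (\<lambda>n. (SUP \<mu>\<in>sparse_fields n (s n). ?P n \<mu>) \<le> b n) sequentially"
  proof (rule eventually_mono[OF ev])
    fix n assume h: "\<forall>\<mu>\<in>sparse_fields n (s n). ?P n \<mu> \<le> b n"
    show "(SUP \<mu>\<in>sparse_fields n (s n). ?P n \<mu>) \<le> b n"
      by (rule cSUP_least) (use h zero_sparse in auto)
  qed
  have "b \<longlonglongrightarrow> 0" unfolding b_def using cp by (rule bound_tendsto)
  from tendsto_sandwich[OF lo hi tendsto_const this] show ?thesis .
qed

theorem mainTheorem17:
  fixes Q :: "nat \<Rightarrow> nat \<Rightarrow> nat \<Rightarrow> real"
    and \<beta> :: real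
    and s :: "nat \<Rightarrow> nat"
    and betahat :: "nat \<Rightarrow> (nat \<Rightarrow> real) \<Rightarrow> real"
  assumes symm: "\<And>n i j. i < n \<Longrightarrow> j < n \<Longrightarrow> Q n i j = Q n j i"
    and diag: "\<And>n i. i < n \<Longrightarrow> Q n i i = 0"
    and opbd: "\<exists>C. \<forall>n. mat_opnorm n (Q n) \<le> C"
    and beta_pos: "\<beta> > 0"
    and high_temp_fail: "liminf (\<lambda>n. ereal ((1 / real n) * ln (ising_Z n \<beta> (Q n) (\<lambda>_. 0) / 2 ^ n))) > 0"
    and mple: "\<And>n \<sigma>. (\<exists>b. pl_score n (Q n) \<sigma> b = 0) \<Longrightarrow> pl_score n (Q n) \<sigma> (betahat n \<sigma>) = 0"
    and s_small: "(\<lambda>n. real (s n) / real n) \<longlonglongrightarrow> 0"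
  shows "(\<forall>\<eta>>0. (\<lambda>n. SUP \<mu>\<in>sparse_fields n (s n).
             ising_prob n \<beta> (Q n) \<mu> {} {\<sigma>. \<bar>betahat n \<sigma> - \<beta>\<bar> > \<eta>}) \<longlonglongrightarrow> 0)
       \<and> (\<forall>S1 :: nat \<Rightarrow> nat set. (\<forall>n. S1 n \<subseteq> {0..<n}) \<longrightarrow>
             (\<lambda>n. real (card (S1 n)) / real n) \<longlonglongrightarrow> 0 \<longrightarrow>
           (\<forall>\<eta>>0. (\<lambda>n. SUP \<mu>\<in>sparse_fields n (s n).
             ising_prob n \<beta> (Q n) \<mu> (S1 n) {\<sigma>. \<bar>betahat n \<sigma> - \<beta>\<bar> > \<eta>}) \<longlonglongrightarrow> 0))"
proof (intro conjI allI impI)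
  fix \<eta> :: real assume eta: "\<eta> > 0"
  have S1sub: "\<forall>n. (\<lambda>n. {}::nat set) n \<subseteq> {0..<n}" by simp
  have S1small: "(\<lambda>n. real (card ((\<lambda>n. {}::nat set) n)) / real n) \<longlonglongrightarrow> 0" by simp
  show "(\<lambda>n. SUP \<mu>\<in>sparse_fields n (s n).
             ising_prob n \<beta> (Q n) \<mu> {} {\<sigma>. \<bar>betahat n \<sigma> - \<beta>\<bar> > \<eta>}) \<longlonglongrightarrow> 0"
    using main_gen[OF symm diag opbd beta_pos high_temp_fail mple s_small S1sub S1small eta] by simp
next
  fix S1 :: "nat \<Rightarrow> nat set" and \<eta> :: real
  assume S1sub: "\<forall>n. S1 n \<subseteq> {0..<n}" and S1small: "(\<lambda>n. real (card (S1 n)) / real n) \<longlonglongrightarrow> 0"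
    and eta: "\<eta> > 0"
  show "(\<lambda>n. SUP \<mu>\<in>sparse_fields n (s n).
             ising_prob n \<beta> (Q n) \<mu> (S1 n) {\<sigma>. \<bar>betahat n \<sigma> - \<beta>\<bar> > \<eta>}) \<longlonglongrightarrow> 0"
    by (rule main_gen[OF symm diag opbd beta_pos high_temp_fail mple s_small S1sub S1small eta])
qed

end
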